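(* Let $(X,d)$ be a metric space and $x\in X$ such that $\limsup_{r\to0}n_{\lambda r}(\overline{B}_X(x,r))<\infty$ for all $\lambda>0$. Then $$\overline{\delta}_X(x)=\limsup_{r\to0}\sup_{T\in\mathcal{T}_xX}\frac{\log n_r(\overline{B}_T(x,1))}{\log 1/r},\qquad \underline{\delta}_X(x)=\liminf_{r\to0}\inf_{T\in\mathcal{T}_xX}\frac{\log n_r(\overline{B}_T(x,1))}{\log 1/r}.$$
   Context: $\overline{B}_X(x,r)=\{y:d(x,y)\le r\}$; $n_r(A)$ is the minimum number of open balls of radius $r$ needed to cover $A$. The lower and upper tangential dimensions of $X$ at $x$ are $\underline{\delta}_X(x)=\liminf_{\lambda\to0}\liminf_{r\to0}\frac{\log n(\lambda r,\overline{B}_X(x,r))}{\log1/\lambda}$ and $\overline{\delta}_X(x)=\limsup_{\lambda\to0}\limsup_{r\to0}\frac{\log n(\lambda r,\overline{B}_X(x,r))}{\log1/\lambda}$. A tangent set of $X$ at $x$ is any limit point as $t\to\infty$ of $(X,x,td)$ (metric rescaled by $t$, base point $x$) in the pointed Gromov–Hausdorff topology; $\mathcal{T}_xX$ is the set of tangent sets, and for $T\in\mathcal{T}_xX$, $\overline{B}_T(x,1)$ is the closed ball of radius 1 about the base point of $T$ (still denoted $x$). *)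

theory Defs
  imports "HOL-Analysis.Analysis" "HOL-Library.Extended_Nat" "HOL-Library.Extended_Real"
begin

definition covnum :: "'b set \<Rightarrow> ('b \<Rightarrow> 'b \<Rightarrow> real) \<Rightarrow> real \<Rightarrow> 'b set \<Rightarrow> enat" where
  "covnum S d r A = Inf {enat (card C) | C. finite C \<and> C \<subseteq> S \<and>
       A \<subseteq> (\<Union>c\<in>C. {y\<in>S. d c y < r})}"

text \<open>Logarithm of an extended natural number (covering numbers are \<ge> 1 here).\<close>
definition elog :: "enat \<Rightarrow> ereal" where
  "elog n = (case n of enat k \<Rightarrow> ereal (ln (real k)) | \<infinity> \<Rightarrow> \<infinity>)"

definition lower_tdim :: "'a::metric_space \<Rightarrow> ereal" where
  "lower_tdim x = Liminf (at_right 0) (\<lambda>lam. Liminf (at_right 0)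
      (\<lambda>r. elog (covnum UNIV dist (lam * r) (cball x r)) / ereal (ln (1 / lam))))"

definition upper_tdim :: "'a::metric_space \<Rightarrow> ereal" where
  "upper_tdim x = Limsup (at_right 0) (\<lambda>lam. Limsup (at_right 0)
      (\<lambda>r. elog (covnum UNIV dist (lam * r) (cball x r)) / ereal (ln (1 / lam))))"

text \<open>Pointed Gromov--Hausdorff convergence (Burago--Burago--Ivanov, Def. 8.1.1) of a
  sequence of pointed metric spaces (Xs n, ds n, ps n) to (Y, dY, q).\<close>
definition pGH_conv ::
  "(nat \<Rightarrow> 'a set) \<Rightarrow> (nat \<Rightarrow> 'a \<Rightarrow> 'a \<Rightarrow> real) \<Rightarrow> (nat \<Rightarrow> 'a)
   \<Rightarrow> 'b set \<Rightarrow> ('b \<Rightarrow> 'b \<Rightarrow> real) \<Rightarrow> 'b \<Rightarrow> bool" where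
  "pGH_conv Xs ds ps Y dY q \<longleftrightarrow>
     (\<forall>R>0. \<forall>\<epsilon>>0. \<forall>\<^sub>F n in sequentially.
        (\<exists>f. (\<forall>a\<in>{a\<in>Xs n. ds n (ps n) a < R}. f a \<in> Y) \<and>
             f (ps n) = q \<and>
             (\<forall>a\<in>{a\<in>Xs n. ds n (ps n) a < R}. \<forall>b\<in>{b\<in>Xs n. ds n (ps n) b < R}.
                 \<bar>dY (f a) (f b) - ds n a b\<bar> < \<epsilon>) \<and>
             (\<forall>y\<in>{y\<in>Y. dY q y < R - \<epsilon>}. \<exists>a\<in>{a\<in>Xs n. ds n (ps n) a < R}.
                 dY (f a) y < \<epsilon>)))"

text \<open>Tangent sets of X at x, represented as complete pointed metric spaces (S, dT, p)
  carried by a subset of the reals (every tangent is separable here, hence of cardinality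
  at most the continuum, so every isometry class has such a representative).\<close>
definition tangents :: "'a::metric_space \<Rightarrow> (real set \<times> (real \<Rightarrow> real \<Rightarrow> real) \<times> real) set" where
  "tangents x = {(S, dT, p). Metric_space S dT \<and> Metric_space.mcomplete S dT \<and> p \<in> S \<and>
      (\<exists>t :: nat \<Rightarrow> real. (\<forall>n. t n > 0) \<and> filterlim t at_top sequentially \<and>
         pGH_conv (\<lambda>n. UNIV) (\<lambda>n a b. t n * dist a b) (\<lambda>n. x) S dT p)}"

definition unit_cball :: "'b set \<times> ('b \<Rightarrow> 'b \<Rightarrow> real) \<times> 'b \<Rightarrow> 'b set" where
  "unit_cball T = (case T of (S, dT, p) \<Rightarrow> {y\<in>S. dT p y \<le> 1})"

definition covnum_T :: "'b set \<times> ('b \<Rightarrow> 'b \<Rightarrow> real) \<times> 'b \<Rightarrow> real \<Rightarrow> 'b set \<Rightarrow> enat" where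
  "covnum_T T r A = (case T of (S, dT, p) \<Rightarrow> covnum S dT r A)"

end

theory Submission
  imports Defs "HOL-Library.Equipollence" "HOL-Library.Diagonal_Subsequence"
begin

lemma covnum_le:
  assumes "finite C" "C \<subseteq> S" "A \<subseteq> (\<Union>c\<in>C. {y\<in>S. d c y < r})"
  shows "covnum S d r A \<le> enat (card C)"
  unfolding covnum_def using assms by (auto intro!: Inf_lower)

lemma covnum_obtain:
  assumes "covnum S d r A \<noteq> \<infinity>"
  obtains C where "finite C" "C \<subseteq> S" "A \<subseteq> (\<Union>c\<in>C. {y\<in>S. d c y < r})"
     "covnum S d r A = enat (card C)"
proof -
  let ?X = "{enat (card C) | C. finite C \<and> C \<subseteq> S \<and> A \<subseteq> (\<Union>c\<in>C. {y\<in>S. d c y < r})}"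
  have ne: "?X \<noteq> {}" using assms unfolding covnum_def by (auto simp: top_enat_def[symmetric])
  have "Inf ?X \<in> ?X" unfolding Inf_enat_def using ne by (auto intro: LeastI)
  then show ?thesis using that unfolding covnum_def by auto
qed

lemma covnum_mono:
  assumes "A \<subseteq> B" "r \<le> r'"
  shows "covnum S d r' A \<le> covnum S d r B"
  unfolding covnum_def
proof (rule Inf_superset_mono, rule subsetI)
  fix m assume "m \<in> {enat (card C) | C. finite C \<and> C \<subseteq> S \<and> B \<subseteq> (\<Union>c\<in>C. {y\<in>S. d c y < r})}"
  then obtain C where C: "m = enat (card C)" "finite C" "C \<subseteq> S" "B \<subseteq> (\<Union>c\<in>C. {y\<in>S. d c y < r})"
    by blast
  have "A \<subseteq> (\<Union>c\<in>C. {y\<in>S. d c y < r'})"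
  proof
    fix a assume "a \<in> A"
    then have "a \<in> B" using assms(1) by blast
    then obtain c where "c \<in> C" "a \<in> S" "d c a < r" using C(4) by blast
    then show "a \<in> (\<Union>c\<in>C. {y\<in>S. d c y < r'})" using assms(2) by force
  qed
  then show "m \<in> {enat (card C) | C. finite C \<and> C \<subseteq> S \<and> A \<subseteq> (\<Union>c\<in>C. {y\<in>S. d c y < r'})}"
    using C by blast
qed

lemma covnum_ge1:
  assumes "a \<in> A"
  shows "1 \<le> covnum S d r A"
  unfolding covnum_def
proof (rule Inf_greatest)
  fix m assume "m \<in> {enat (card C) | C. finite C \<and> C \<subseteq> S \<and> A \<subseteq> (\<Union>c\<in>C. {y\<in>S. d c y < r})}"
  then obtain C where C: "m = enat (card C)" "finite C" "A \<subseteq> (\<Union>c\<in>C. {y\<in>S. d c y < r})" by auto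
  then have "C \<noteq> {}" using assms by auto
  then have "card C \<ge> 1" using C by (simp add: Suc_leI card_gt_0_iff)
  then show "1 \<le> m" using C by (simp add: one_enat_def)
qed

lemma elog_nonneg: "0 \<le> elog n"
proof (cases n)
  case (enat k)
  then show ?thesis by (cases "k = 0") (auto simp: elog_def)
qed (auto simp: elog_def)

lemma elog_mono:
  assumes "m \<le> n"
  shows "elog m \<le> elog n"
proof (cases m)
  case (enat a)
  show ?thesis
  proof (cases "a = 0")
    case True
    then show ?thesis using enat elog_nonneg[of n] by (simp add: elog_def zero_ereal_def)
  next
    case False
    then show ?thesis using enat assms by (cases n) (auto simp: elog_def)
  qed
next
  case infinity
  then show ?thesis using assms by (auto simp: elog_def)
qed

lemma ereal_div_change:
  fixes e :: ereal
  assumes "0 \<le> e" "L1 > 0" "L2 > 0"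
  shows "e / ereal L1 = (e / ereal L2) * ereal (L2 / L1)"
  using assms by (cases e) auto

lemma ereal_le_mult_eps:
  fixes A B :: ereal
  assumes "\<And>d. d > 0 \<Longrightarrow> A \<le> B * ereal (1 + d)" "0 \<le> B"
  shows "A \<le> B"
proof (cases B)
  case (real b)
  then have b: "b \<ge> 0" using assms by auto
  show ?thesis
  proof (cases A)
    case (real a)
    have "a \<le> b"
    proof (rule field_le_epsilon)
      fix e :: real assume e: "e > 0"
      have "A \<le> B * ereal (1 + e/(b+1))" using assms(1)[of "e/(b+1)"] e b by auto
      then have "a \<le> b * (1 + e/(b+1))" using real \<open>B = ereal b\<close> by auto
      also have "\<dots> = b + e * (b/(b+1))" using b by (simp add: field_simps)
      also have "\<dots> \<le> b + e * 1" using b e by (intro add_left_mono mult_left_mono) auto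
      finally show "a \<le> b + e" by simp
    qed
    then show ?thesis using real \<open>B = ereal b\<close> by auto
  next
    case PInf
    then show ?thesis using assms(1)[of 1] \<open>B = ereal b\<close> by auto
  qed auto
qed (use assms(2) in auto)

lemma limsup_ratio:
  fixes a b :: "real \<Rightarrow> ereal" and \<rho> :: "real \<Rightarrow> real"
  assumes "(\<rho> \<longlongrightarrow> 1) (at_right 0)" "\<forall>\<^sub>F x in at_right 0. a x \<le> b x * ereal (\<rho> x)"
    "\<forall>\<^sub>F x in at_right 0. 0 \<le> b x"
  shows "Limsup (at_right 0) a \<le> Limsup (at_right (0::real)) b"
proof (rule ereal_le_mult_eps)
  show "0 \<le> Limsup (at_right 0) b" using assms(3) by (intro le_Limsup) auto
  fix d :: real assume d: "d > 0"
  have "\<forall>\<^sub>F x in at_right 0. \<rho> x < 1 + d"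
    using order_tendstoD(2)[OF assms(1), of "1+d"] d by auto
  then have "\<forall>\<^sub>F x in at_right 0. a x \<le> b x * ereal (1 + d)"
    using assms(2,3)
  proof eventually_elim
    case (elim x)
    then show ?case by (meson dual_order.trans ereal_less_eq(3) ereal_mult_left_mono less_imp_le)
  qed
  then have "Limsup (at_right 0) a \<le> Limsup (at_right 0) (\<lambda>x. b x * ereal (1 + d))"
    by (rule Limsup_mono)
  also have "\<dots> = Limsup (at_right 0) b * ereal (1 + d)"
    using d by (intro Limsup_ereal_mult_right) auto
  finally show "Limsup (at_right 0) a \<le> Limsup (at_right 0) b * ereal (1 + d)" .
qed

lemma liminf_ratio:
  fixes a b :: "real \<Rightarrow> ereal" and \<rho> :: "real \<Rightarrow> real"
  assumes "(\<rho> \<longlongrightarrow> 1) (at_right 0)" "\<forall>\<^sub>F x in at_right 0. a x \<le> b x * ereal (\<rho> x)"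
    "\<forall>\<^sub>F x in at_right 0. 0 \<le> b x"
  shows "Liminf (at_right 0) a \<le> Liminf (at_right (0::real)) b"
proof (rule ereal_le_mult_eps)
  show "0 \<le> Liminf (at_right 0) b" using assms(3) by (intro Liminf_bounded) auto
  fix d :: real assume d: "d > 0"
  have "\<forall>\<^sub>F x in at_right 0. \<rho> x < 1 + d"
    using order_tendstoD(2)[OF assms(1), of "1+d"] d by auto
  then have "\<forall>\<^sub>F x in at_right 0. a x \<le> b x * ereal (1 + d)"
    using assms(2,3)
  proof eventually_elim
    case (elim x)
    then show ?case by (meson dual_order.trans ereal_less_eq(3) ereal_mult_left_mono less_imp_le)
  qed
  then have "Liminf (at_right 0) a \<le> Liminf (at_right 0) (\<lambda>x. b x * ereal (1 + d))"
    by (rule Liminf_mono)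
  also have "\<dots> = Liminf (at_right 0) b * ereal (1 + d)"
    using d by (intro Liminf_ereal_mult_right) auto
  finally show "Liminf (at_right 0) a \<le> Liminf (at_right 0) b * ereal (1 + d)" .
qed

lemma limsup_rescale:
  fixes f :: "real \<Rightarrow> 'b::complete_lattice"
  assumes "c > 0"
  shows "Limsup (at_right 0) (\<lambda>x. f (c * x)) = Limsup (at_right 0) f"
proof -
  have "at_right (0::real) = filtermap (times c) (at_right 0)"
    using filtermap_times_pos_at_right[OF assms, of 0] by simp
  moreover have "inj (times c)" using assms by (auto intro: injI)
  ultimately show ?thesis using Limsup_filtermap_eq[of "times c" "at_right 0" f] by metis
qed

lemma liminf_rescale:
  fixes f :: "real \<Rightarrow> 'b::complete_lattice"
  assumes "c > 0"
  shows "Liminf (at_right 0) (\<lambda>x. f (c * x)) = Liminf (at_right 0) f"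
proof -
  have "at_right (0::real) = filtermap (times c) (at_right 0)"
    using filtermap_times_pos_at_right[OF assms, of 0] by simp
  moreover have "inj (times c)" using assms by (auto intro: injI)
  ultimately show ?thesis using Liminf_filtermap_eq[of "times c" "at_right 0" f] by metis
qed

lemma pGH_unfold:
  assumes "pGH_conv (\<lambda>n. UNIV) (\<lambda>n a b. t n * dist a b) (\<lambda>n. x) S dT p" "R > 0" "e > 0"
  shows "\<forall>\<^sub>F n in sequentially. \<exists>f. (\<forall>a. t n * dist x a < R \<longrightarrow> f a \<in> S) \<and> f x = p \<and>
     (\<forall>a b. t n * dist x a < R \<longrightarrow> t n * dist x b < R \<longrightarrow> \<bar>dT (f a) (f b) - t n * dist a b\<bar> < e) \<and>
     (\<forall>y\<in>S. dT p y < R - e \<longrightarrow> (\<exists>a. t n * dist x a < R \<and> dT (f a) y < e))"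
  using assms(1)[unfolded pGH_conv_def, rule_format, OF assms(2,3)]
  by (rule eventually_mono) auto

lemma tangent_cov_upper:
  fixes x :: "'a::metric_space"
  assumes MS: "Metric_space S dT"
    and conv: "pGH_conv (\<lambda>n. UNIV) (\<lambda>n a b. t n * dist a b) (\<lambda>n. x) S dT p"
    and tpos: "\<And>n. t n > 0"
    and e: "e > 0" "r - 2*e > 0" "e \<le> 1"
  shows "\<forall>\<^sub>F n in sequentially. covnum S dT r {y\<in>S. dT p y \<le> 1}
           \<le> covnum UNIV dist ((r-2*e)/t n) (cball x ((1+2*e)/t n))"
proof -
  interpret M: Metric_space S dT by (fact MS)
  define R where "R = 3 + r"
  have R: "R > 0" using e by (simp add: R_def)
  show ?thesis
  using pGH_unfold[OF conv R e(1)]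
  proof eventually_elim
    case (elim n)
    then obtain f where f1: "\<And>a. t n * dist x a < R \<Longrightarrow> f a \<in> S" and f2: "f x = p"
      and f3: "\<And>a b. t n * dist x a < R \<Longrightarrow> t n * dist x b < R \<Longrightarrow> \<bar>dT (f a) (f b) - t n * dist a b\<bar> < e"
      and f4: "\<And>y. y \<in> S \<Longrightarrow> dT p y < R - e \<Longrightarrow> \<exists>a. t n * dist x a < R \<and> dT (f a) y < e"
      by blast
    have tn: "t n > 0" by (rule tpos)
    have x0: "t n * dist x x < R" using R by simp
    have pS: "p \<in> S" using f1[OF x0] f2 by simp
    show ?case
    proof (cases "covnum UNIV dist ((r-2*e)/t n) (cball x ((1+2*e)/t n)) = \<infinity>")
      case True then show ?thesis by simp
    next
      case False
      then obtain C where C: "finite C"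
        and cov: "cball x ((1+2*e)/t n) \<subseteq> (\<Union>c\<in>C. {y\<in>UNIV. dist c y < (r-2*e)/t n})"
        and eq: "covnum UNIV dist ((r-2*e)/t n) (cball x ((1+2*e)/t n)) = enat (card C)"
        by (rule covnum_obtain) blast
      define C' where "C' = {c\<in>C. t n * dist x c < R}"
      have C'fin: "finite C'" using C by (simp add: C'_def)
      have "covnum S dT r {y\<in>S. dT p y \<le> 1} \<le> enat (card (f ` C'))"
      proof (rule covnum_le)
        show "finite (f ` C')" using C'fin by simp
        show "f ` C' \<subseteq> S" using f1 by (auto simp: C'_def)
        show "{y\<in>S. dT p y \<le> 1} \<subseteq> (\<Union>c\<in>f ` C'. {z\<in>S. dT c z < r})"
        proof
          fix y assume y: "y \<in> {y\<in>S. dT p y \<le> 1}"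
          then have yS: "y \<in> S" and y1: "dT p y \<le> 1" by auto
          have "dT p y < R - e" using y1 e by (simp add: R_def)
          then obtain a where a1: "t n * dist x a < R" and a2: "dT (f a) y < e" using f4 yS by blast
          have faS: "f a \<in> S" using f1 a1 by blast
          have d1: "\<bar>dT p (f a) - t n * dist x a\<bar> < e" using f3[OF x0 a1] f2 by simp
          have "dT p (f a) \<le> dT p y + dT y (f a)" using M.triangle pS yS faS by blast
          also have "dT y (f a) = dT (f a) y" by (rule M.commute)
          finally have "t n * dist x a < 1 + 2*e" using d1 a2 y1 by linarith
          then have "dist x a \<le> (1+2*e)/t n" using tn by (simp add: field_simps)
          then have "a \<in> cball x ((1+2*e)/t n)" by simp
          then obtain c where cC: "c \<in> C" and ca: "dist c a < (r-2*e)/t n" using cov by blast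
          have ca': "t n * dist c a < r - 2*e" using ca tn by (simp add: field_simps)
          have "t n * dist x c \<le> t n * dist x a + t n * dist a c"
            using dist_triangle[of x c a] tn by (simp add: dist_commute distrib_left[symmetric])
          also have "\<dots> < R" using \<open>t n * dist x a < 1 + 2*e\<close> ca' by (simp add: dist_commute R_def)
          finally have c1: "t n * dist x c < R" .
          then have cC': "c \<in> C'" using cC by (simp add: C'_def)
          have fcS: "f c \<in> S" using f1 c1 by blast
          have d2: "\<bar>dT (f c) (f a) - t n * dist c a\<bar> < e" using f3[OF c1 a1] .
          have "dT (f c) y \<le> dT (f c) (f a) + dT (f a) y" using M.triangle fcS faS yS by blast
          then have "dT (f c) y < r" using d2 a2 ca' by linarith
          then show "y \<in> (\<Union>c\<in>f ` C'. {z\<in>S. dT c z < r})" using cC' yS by blast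
        qed
      qed
      also have "enat (card (f ` C')) \<le> enat (card C)"
        using card_image_le[OF C'fin, of f] card_mono[OF C, of C'] by (auto simp: C'_def)
      finally show ?thesis using eq by simp
    qed
  qed
qed

lemma tangent_cov_lower:
  fixes x :: "'a::metric_space"
  assumes MS: "Metric_space S dT"
    and conv: "pGH_conv (\<lambda>n. UNIV) (\<lambda>n a b. t n * dist a b) (\<lambda>n. x) S dT p"
    and tpos: "\<And>n. t n > 0"
    and e: "e > 0" "e < 1" "r > 0"
  shows "\<forall>\<^sub>F n in sequentially. covnum UNIV dist ((r+2*e)/t n) (cball x ((1-e)/t n))
           \<le> covnum S dT r {y\<in>S. dT p y \<le> 1}"
proof -
  interpret M: Metric_space S dT by (fact MS)
  define R where "R = 3 + r"
  have R: "R > 0" using e by (simp add: R_def)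
  show ?thesis
  using pGH_unfold[OF conv R e(1)]
  proof eventually_elim
    case (elim n)
    then obtain f where f1: "\<And>a. t n * dist x a < R \<Longrightarrow> f a \<in> S" and f2: "f x = p"
      and f3: "\<And>a b. t n * dist x a < R \<Longrightarrow> t n * dist x b < R \<Longrightarrow> \<bar>dT (f a) (f b) - t n * dist a b\<bar> < e"
      and f4: "\<And>y. y \<in> S \<Longrightarrow> dT p y < R - e \<Longrightarrow> \<exists>a. t n * dist x a < R \<and> dT (f a) y < e"
      by blast
    have tn: "t n > 0" by (rule tpos)
    have x0: "t n * dist x x < R" using R by simp
    have pS: "p \<in> S" using f1[OF x0] f2 by simp
    show ?case
    proof (cases "covnum S dT r {y\<in>S. dT p y \<le> 1} = \<infinity>")
      case True then show ?thesis by simp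
    next
      case False
      then obtain D where D: "finite D" "D \<subseteq> S"
        and cov: "{y\<in>S. dT p y \<le> 1} \<subseteq> (\<Union>c\<in>D. {y\<in>S. dT c y < r})"
        and eq: "covnum S dT r {y\<in>S. dT p y \<le> 1} = enat (card D)"
        by (rule covnum_obtain) blast
      define D' where "D' = {c\<in>D. dT p c < 1 + r}"
      have "\<forall>c\<in>D'. \<exists>a. t n * dist x a < R \<and> dT (f a) c < e"
        using f4 D e by (auto simp: D'_def R_def)
      then obtain g where g: "\<And>c. c \<in> D' \<Longrightarrow> t n * dist x (g c) < R \<and> dT (f (g c)) c < e"
        by metis
      have D'fin: "finite D'" using D by (simp add: D'_def)
      have "covnum UNIV dist ((r+2*e)/t n) (cball x ((1-e)/t n)) \<le> enat (card (g ` D'))"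
      proof (rule covnum_le)
        show "finite (g ` D')" using D'fin by simp
        show "g ` D' \<subseteq> UNIV" by simp
        show "cball x ((1-e)/t n) \<subseteq> (\<Union>c\<in>g ` D'. {z\<in>UNIV. dist c z < (r+2*e)/t n})"
        proof
          fix a assume "a \<in> cball x ((1-e)/t n)"
          then have "dist x a \<le> (1-e)/t n" by simp
          then have a0: "t n * dist x a \<le> 1 - e" using tn by (simp add: field_simps)
          then have a1: "t n * dist x a < R" using e by (simp add: R_def)
          have faS: "f a \<in> S" using f1 a1 by blast
          have d1: "\<bar>dT p (f a) - t n * dist x a\<bar> < e" using f3[OF x0 a1] f2 by simp
          then have "dT p (f a) \<le> 1" using a0 by linarith
          then obtain c where cD: "c \<in> D" and c1: "dT c (f a) < r" using cov faS by blast
          have cS: "c \<in> S" using cD D by blast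
          have "dT p c \<le> dT p (f a) + dT (f a) c" using M.triangle pS faS cS by blast
          then have "dT p c < 1 + r" using \<open>dT p (f a) \<le> 1\<close> c1 M.commute[of c "f a"] by linarith
          then have cD': "c \<in> D'" using cD by (simp add: D'_def)
          note gc = g[OF cD']
          have gS: "f (g c) \<in> S" using f1 gc by blast
          have d2: "\<bar>dT (f (g c)) (f a) - t n * dist (g c) a\<bar> < e" using f3 gc a1 by blast
          have "dT (f (g c)) (f a) \<le> dT (f (g c)) c + dT c (f a)" using M.triangle gS cS faS by blast
          then have "t n * dist (g c) a < r + 2*e" using d2 gc c1 by linarith
          then have "dist (g c) a < (r+2*e)/t n" using tn by (simp add: field_simps)
          then show "a \<in> (\<Union>c\<in>g ` D'. {z\<in>UNIV. dist c z < (r+2*e)/t n})" using cD' by blast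
        qed
      qed
      also have "enat (card (g ` D')) \<le> enat (card D)"
        using card_image_le[OF D'fin, of g] card_mono[OF D(1), of D'] by (auto simp: D'_def)
      finally show ?thesis using eq by simp
    qed
  qed
qed

lemma transport_metric:
  assumes MS: "Metric_space M d" and inj: "inj_on g M"
  shows "Metric_space (g ` M) (\<lambda>a b. d (inv_into M g a) (inv_into M g b))"
proof -
  interpret Metric_space M d by (fact MS)
  show ?thesis
  proof
    fix a b assume "a \<in> g ` M" "b \<in> g ` M"
    then show "(d (inv_into M g a) (inv_into M g b) = 0) = (a = b)"
      using inj by (auto simp: inv_into_f_f)
  next
    fix a b c assume "a \<in> g ` M" "b \<in> g ` M" "c \<in> g ` M"
    then show "d (inv_into M g a) (inv_into M g c) \<le> d (inv_into M g a) (inv_into M g b) + d (inv_into M g b) (inv_into M g c)"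
      by (intro triangle) (auto simp: inv_into_into)
  qed (auto simp: commute)
qed

lemma transport_mcomplete:
  assumes MS: "Metric_space M d" and mc: "Metric_space.mcomplete M d" and inj: "inj_on g M"
  shows "Metric_space.mcomplete (g ` M) (\<lambda>a b. d (inv_into M g a) (inv_into M g b))"
proof -
  interpret M1: Metric_space M d by (fact MS)
  interpret M2: Metric_space "g ` M" "\<lambda>a b. d (inv_into M g a) (inv_into M g b)"
    by (rule transport_metric[OF MS inj])
  show ?thesis
    unfolding M2.mcomplete_def
  proof (intro allI impI)
    fix \<sigma> assume "M2.MCauchy \<sigma>"
    then have c: "range \<sigma> \<subseteq> g ` M" "\<And>e. e > 0 \<Longrightarrow> \<exists>N. \<forall>n n'. N \<le> n \<longrightarrow> N \<le> n' \<longrightarrow>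
        d (inv_into M g (\<sigma> n)) (inv_into M g (\<sigma> n')) < e"
      unfolding M2.MCauchy_def by auto
    define \<tau> where "\<tau> n = inv_into M g (\<sigma> n)" for n
    have \<tau>M: "\<tau> n \<in> M" for n
      using c(1) unfolding \<tau>_def by (meson inv_into_into range_subsetD)
    have "M1.MCauchy \<tau>"
      unfolding M1.MCauchy_def using c(2) \<tau>M by (auto simp: \<tau>_def)
    then obtain l where "limitin M1.mtopology \<tau> l sequentially"
      using mc unfolding M1.mcomplete_def by blast
    then have l: "l \<in> M" "\<And>e. e > 0 \<Longrightarrow> \<forall>\<^sub>F n in sequentially. \<tau> n \<in> M \<and> d (\<tau> n) l < e"
      unfolding M1.limitin_metric by auto
    have "limitin M2.mtopology \<sigma> (g l) sequentially"
      unfolding M2.limitin_metric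
    proof (intro conjI allI impI)
      show "g l \<in> g ` M" using l by blast
      fix e :: real assume "e > 0"
      show "\<forall>\<^sub>F n in sequentially. \<sigma> n \<in> g ` M \<and> d (inv_into M g (\<sigma> n)) (inv_into M g (g l)) < e"
        using l(2)[OF \<open>e > 0\<close>] c(1) l(1) inj by (auto simp: \<tau>_def inv_into_f_f elim!: eventually_mono)
    qed
    then show "\<exists>x. limitin M2.mtopology \<sigma> x sequentially" by blast
  qed
qed

lemma inj_fun_real: "\<exists>g :: (nat \<Rightarrow> real) \<Rightarrow> real. inj g"
proof -
  obtain e :: "nat set \<Rightarrow> real" where e: "bij_betw e UNIV UNIV"
    using nat_sets_eqpoll_reals unfolding eqpoll_def by blast
  have einj: "inj e" using e by (simp add: bij_betw_def)
  have esurj: "surj e" using e by (simp add: bij_betw_def)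
  define e' where "e' = inv e"
  have e'inj: "inj e'" unfolding e'_def using esurj by (rule surj_imp_inj_inv)
  define A where "A F = {prod_encode (n, m) | n m. m \<in> e' (F n)}" for F :: "nat \<Rightarrow> real"
  have memA: "prod_encode (n, m) \<in> A F \<longleftrightarrow> m \<in> e' (F n)" for F n m
    by (auto simp: A_def prod_encode_eq)
  have "inj (\<lambda>F. e (A F))"
  proof (rule injI)
    fix F G assume "e (A F) = e (A G)"
    then have AFG: "A F = A G" using einj by (simp add: inj_eq)
    show "F = G"
    proof
      fix n
      have "e' (F n) = e' (G n)"
      proof (rule set_eqI)
        fix m show "m \<in> e' (F n) \<longleftrightarrow> m \<in> e' (G n)" using memA[of n m F] memA[of n m G] AFG by simp
      qed
      then show "F n = G n" using e'inj by (simp add: inj_eq)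
    qed
  qed
  then show ?thesis by blast
qed

lemma net_exists:
  fixes x :: "'a::metric_space"
  assumes "covnum UNIV dist (u / K) (cball x (K * u)) \<le> enat N" "u > 0" "K \<ge> 1"
  shows "\<exists>P::nat \<Rightarrow> 'a. (\<forall>i. dist x (P i) \<le> (K + 1) * u) \<and>
            (\<forall>a\<in>cball x (K * u). \<exists>i<N. dist (P i) a < u / K)"
proof -
  have "covnum UNIV dist (u / K) (cball x (K * u)) \<noteq> \<infinity>" using enat_ile[OF assms(1)] by auto
  then obtain C where C: "finite C" "cball x (K * u) \<subseteq> (\<Union>c\<in>C. {y\<in>UNIV. dist c y < u / K})"
      "covnum UNIV dist (u / K) (cball x (K * u)) = enat (card C)"
    by (rule covnum_obtain) blast
  have cardC: "card C \<le> N" using C(3) assms(1) by simp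
  obtain h where h: "bij_betw h {0..<card C} C" using ex_bij_betw_nat_finite[OF C(1)] by blast
  define P where "P i = (if i < card C \<and> (\<exists>a\<in>cball x (K * u). dist (h i) a < u / K) then h i else x)" for i
  show ?thesis
  proof (intro exI[of _ P] conjI allI ballI)
    fix i
    show "dist x (P i) \<le> (K + 1) * u"
    proof (cases "i < card C \<and> (\<exists>a\<in>cball x (K * u). dist (h i) a < u / K)")
      case True
      then obtain a where a: "dist x a \<le> K * u" "dist (h i) a < u / K" by auto
      have "u / K \<le> u" using assms by (simp add: divide_le_eq)
      have "dist x (h i) \<le> dist x a + dist (h i) a" by (metis dist_commute dist_triangle)
      also have "\<dots> \<le> (K + 1) * u" using a \<open>u / K \<le> u\<close> by (simp add: algebra_simps)
      finally show ?thesis using True by (simp add: P_def)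
    next
      case False
      then have "P i = x" unfolding P_def by (rule if_not_P)
      then show ?thesis using assms by simp
    qed
  next
    fix a assume a: "a \<in> cball x (K * u)"
    then obtain c where c: "c \<in> C" "dist c a < u / K" using C(2) by blast
    have "c \<in> h ` {0..<card C}" using h c(1) by (simp add: bij_betw_def)
    then obtain i where i: "i < card C" "h i = c" by auto
    have "P i = c" using i c a by (auto simp: P_def)
    then show "\<exists>i<N. dist (P i) a < u / K" using i c cardC by (intro exI[of _ i]) auto
  qed
qed

lemma tangent_exists:
  fixes x :: "'a::metric_space" and s :: "nat \<Rightarrow> real"
  assumes H: "\<And>lam. lam > 0 \<Longrightarrow> \<exists>N::nat. \<exists>\<rho>>0. \<forall>u. 0 < u \<and> u < \<rho> \<longrightarrow>
                 covnum UNIV dist (lam * u) (cball x u) \<le> enat N"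
    and spos: "\<And>k. s k > 0" and s0: "s \<longlonglongrightarrow> 0"
  shows "\<exists>S dT p \<sigma>. (S,dT,p) \<in> tangents x \<and> strict_mono \<sigma> \<and>
           pGH_conv (\<lambda>n. UNIV) (\<lambda>n a b. (1 / s (\<sigma> n)) * dist a b) (\<lambda>n. x) S dT p"
proof -
  define Km where "Km m = real m + 1" for m :: nat
  have Km1: "Km m \<ge> 1" for m by (simp add: Km_def)
  have "\<forall>m. \<exists>N::nat. \<exists>\<rho>>0. \<forall>u. 0 < u \<and> u < \<rho> \<longrightarrow>
                 covnum UNIV dist ((1 / (Km m * Km m)) * u) (cball x u) \<le> enat N"
  proof
    fix m
    have "1 / (Km m * Km m) > 0" using Km1[of m] by simp
    then show "\<exists>N::nat. \<exists>\<rho>>0. \<forall>u. 0 < u \<and> u < \<rho> \<longrightarrow>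
                 covnum UNIV dist ((1 / (Km m * Km m)) * u) (cball x u) \<le> enat N" by (rule H)
  qed
  then obtain Nf \<rho>f where NR1: "\<And>m. \<rho>f m > 0"
    and NR2: "\<And>m u. 0 < u \<Longrightarrow> u < \<rho>f m \<Longrightarrow> covnum UNIV dist ((1 / (Km m * Km m)) * u) (cball x u) \<le> enat (Nf m)"
    by metis
  have net: "\<forall>k m. \<exists>P. (\<forall>i. dist x (P i) \<le> (Km m + 1) * s k) \<and>
      (Km m * s k < \<rho>f m \<longrightarrow> (\<forall>a\<in>cball x (Km m * s k). \<exists>i<Nf m. dist (P i) a < s k / Km m))"
  proof (intro allI)
    fix k m
    show "\<exists>P. (\<forall>i. dist x (P i) \<le> (Km m + 1) * s k) \<and>
      (Km m * s k < \<rho>f m \<longrightarrow> (\<forall>a\<in>cball x (Km m * s k). \<exists>i<Nf m. dist (P i) a < s k / Km m))"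
    proof (cases "Km m * s k < \<rho>f m")
      case True
      have eq: "(1 / (Km m * Km m)) * (Km m * s k) = s k / Km m" using Km1[of m] by (simp add: field_simps)
      have "covnum UNIV dist (s k / Km m) (cball x (Km m * s k)) \<le> enat (Nf m)"
        using NR2[of "Km m * s k" m] True spos[of k] Km1[of m] unfolding eq by simp
      then obtain P where "(\<forall>i. dist x (P i) \<le> (Km m + 1) * s k) \<and>
            (\<forall>a\<in>cball x (Km m * s k). \<exists>i<Nf m. dist (P i) a < s k / Km m)"
        using net_exists[OF _ spos Km1] by blast
      then show ?thesis by blast
    next
      case False
      have "0 \<le> (Km m + 1) * s k" using Km1[of m] spos[of k] by simp
      then show ?thesis using False by (intro exI[of _ "\<lambda>i. x"]) simp
    qed
  qed
  then obtain Pt where Pt1: "\<And>k m i. dist x (Pt k m i) \<le> (Km m + 1) * s k"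
    and Pt2: "\<And>k m a. Km m * s k < \<rho>f m \<Longrightarrow> a \<in> cball x (Km m * s k) \<Longrightarrow> \<exists>i<Nf m. dist (Pt k m i) a < s k / Km m"
    by metis
  define jidx where "jidx m i = Suc (prod_encode (m, i))" for m i
  define Q where "Q k j = (if j = 0 then x else Pt k (fst (prod_decode (j - 1))) (snd (prod_decode (j - 1))))" for k j
  have Qj: "Q k (jidx m i) = Pt k m i" for k m i by (simp add: Q_def jidx_def)
  have Q0: "Q k 0 = x" for k by (simp add: Q_def)
  have Qb: "dist x (Q k j) \<le> (real j + 2) * s k" for k j
  proof (cases "j = 0")
    case True then show ?thesis using spos[of k] by (simp add: Q0)
  next
    case False
    define m where "m = fst (prod_decode (j - 1))"
    have "m \<le> prod_encode (prod_decode (j - 1))" unfolding m_def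
      by (metis le_prod_encode_1 prod.collapse)
    then have "m \<le> j" by simp
    then have "Km m + 1 \<le> real j + 2" by (simp add: Km_def)
    then have "(Km m + 1) * s k \<le> (real j + 2) * s k" using spos[of k] by (intro mult_right_mono) auto
    moreover have "Q k j = Pt k m (snd (prod_decode (j - 1)))" using False by (simp add: Q_def m_def)
    ultimately show ?thesis using Pt1 by (metis order_trans)
  qed
  define Dk where "Dk k j j' = dist (Q k j) (Q k j') / s k" for k j j'
  have Dk_nn: "0 \<le> Dk k j j'" for k j j' using spos[of k] by (simp add: Dk_def)
  have Dk_bd: "Dk k j j' \<le> real j + real j' + 4" for k j j'
  proof -
    have "dist (Q k j) (Q k j') \<le> dist x (Q k j) + dist x (Q k j')" by (rule dist_triangle3)
    also have "\<dots> \<le> (real j + real j' + 4) * s k" using Qb[of k j] Qb[of k j'] by (simp add: algebra_simps)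
    finally show ?thesis using spos[of k] by (simp add: Dk_def divide_le_eq)
  qed
  have Dk_tri: "Dk k a c \<le> Dk k a b + Dk k b c" for k a b c
    using dist_triangle[of "Q k a" "Q k c" "Q k b"] spos[of k]
    by (simp add: Dk_def add_divide_distrib[symmetric] divide_right_mono)
  have Dk_sym: "Dk k a b = Dk k b a" for k a b by (simp add: Dk_def dist_commute)
  have Dk_refl: "Dk k a a = 0" for k a by (simp add: Dk_def)
  define PP where "PP n (r :: nat \<Rightarrow> nat) = convergent (\<lambda>k. Dk (r k) (fst (prod_decode n)) (snd (prod_decode n)))" for n r
  interpret SS: subseqs PP
  proof
    fix n and r :: "nat \<Rightarrow> nat" assume "strict_mono r"
    let ?f = "\<lambda>k. Dk (r k) (fst (prod_decode n)) (snd (prod_decode n))"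
    have "bounded (range ?f)"
      unfolding bounded_real using Dk_nn Dk_bd by (intro exI[of _ "real (fst (prod_decode n)) + real (snd (prod_decode n)) + 4"]) auto
    then obtain l r' where "strict_mono r'" "(?f \<circ> r') \<longlonglongrightarrow> l"
      using bounded_imp_convergent_subsequence by blast
    then show "\<exists>r'. strict_mono r' \<and> PP n (r \<circ> r')" by (auto simp: PP_def convergent_def o_def)
  qed
  define \<sigma> where "\<sigma> = SS.diagseq"
  have \<sigma>mono: "strict_mono \<sigma>" unfolding \<sigma>_def by (rule SS.subseq_diagseq)
  have conv: "convergent (\<lambda>n. Dk (\<sigma> n) j j')" for j j'
  proof -
    let ?n = "prod_encode (j, j')"
    have "PP ?n (\<sigma> \<circ> (+) (Suc ?n))" unfolding \<sigma>_def
    proof (rule SS.diagseq_holds)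
      fix r s' :: "nat \<Rightarrow> nat" and n :: nat assume "strict_mono r" "PP n s'"
      then show "PP n (s' \<circ> r)"
        unfolding PP_def convergent_def o_def using LIMSEQ_subseq_LIMSEQ[of _ _ r] by (auto simp: o_def)
    qed
    then have "convergent (\<lambda>k. Dk (\<sigma> (k + Suc ?n)) j j')" by (simp add: PP_def o_def add.commute)
    then obtain L where "(\<lambda>k. Dk (\<sigma> (k + Suc ?n)) j j') \<longlonglongrightarrow> L" unfolding convergent_def by blast
    then have "(\<lambda>k. Dk (\<sigma> k) j j') \<longlonglongrightarrow> L" by (rule LIMSEQ_offset[where f = "\<lambda>k. Dk (\<sigma> k) j j'"])
    then show ?thesis by (auto simp: convergent_def)
  qed
  define D where "D j j' = lim (\<lambda>n. Dk (\<sigma> n) j j')" for j j'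
  have Dlim: "(\<lambda>n. Dk (\<sigma> n) j j') \<longlonglongrightarrow> D j j'" for j j'
    using conv[of j j'] by (simp add: D_def convergent_LIMSEQ_iff)
  have D_refl: "D j j = 0" for j
    using Dlim[of j j] by (simp add: Dk_refl LIMSEQ_const_iff)
  have D_sym: "D j j' = D j' j" for j j'
    unfolding D_def by (simp add: Dk_sym)
  have D_tri: "D a c \<le> D a b + D b c" for a b c
    by (rule LIMSEQ_le[OF Dlim tendsto_add[OF Dlim Dlim]]) (use Dk_tri in auto)
  have D_nn: "0 \<le> D a b" for a b
    by (rule LIMSEQ_le_const[OF Dlim]) (use Dk_nn in auto)
  define rep where "rep j = (LEAST i. D i j = 0)" for j
  have rep1: "D (rep j) j = 0" for j unfolding rep_def by (rule LeastI[of _ j]) (rule D_refl)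
  have rep_least: "D i j = 0 \<Longrightarrow> rep j \<le> i" for i j unfolding rep_def by (rule Least_le)
  have D_rep_eq: "D a c = D b c" if "D a b = 0" for a b c
  proof -
    have "D a c \<le> D a b + D b c" by (rule D_tri)
    moreover have "D b c \<le> D b a + D a c" by (rule D_tri)
    ultimately show ?thesis using that D_sym[of a b] by simp
  qed
  have Drep: "D (rep j) (rep k) = D j k" for j k
  proof -
    have "D (rep j) (rep k) = D j (rep k)" by (rule D_rep_eq[OF rep1])
    also have "\<dots> = D (rep k) j" by (rule D_sym)
    also have "\<dots> = D k j" by (rule D_rep_eq[OF rep1])
    finally show ?thesis by (simp add: D_sym)
  qed
  have MS0: "Metric_space (range rep) D"
  proof
    fix a b assume ab: "a \<in> range rep" "b \<in> range rep"
    then obtain j k where jk: "a = rep j" "b = rep k" by auto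
    show "(D a b = 0) = (a = b)"
    proof
      assume "D a b = 0"
      then have "D a k = 0" using D_rep_eq[of b a k] rep1[of k] D_sym[of a b] jk by simp
      then have 1: "b \<le> a" using rep_least jk by blast
      have "D b a = 0" using \<open>D a b = 0\<close> D_sym by simp
      then have "D b j = 0" using D_rep_eq[of a b j] rep1[of j] D_sym[of b a] jk by simp
      then have "a \<le> b" using rep_least jk by blast
      with 1 show "a = b" by simp
    qed (simp add: D_refl)
  qed (auto simp: D_nn D_sym D_tri)
  obtain F :: "nat \<Rightarrow> nat \<Rightarrow> real" and m' :: "(nat \<Rightarrow> real) metric" where
    mc1: "mcomplete_of m'" and mc2: "F \<in> range rep \<rightarrow> mspace m'"
    and mc3: "mtopology_of m' closure_of F ` range rep = mspace m'"
    and mc4: "\<And>a b. a \<in> range rep \<Longrightarrow> b \<in> range rep \<Longrightarrow> mdist m' (F a) (F b) = D a b"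
    using Metric_space.metric_completion[OF MS0] by metis
  interpret MM: Metric_space "mspace m'" "mdist m'" by simp
  define \<Psi> where "\<Psi> j = F (rep j)" for j
  have \<Psi>in: "\<Psi> j \<in> mspace m'" for j using mc2 by (auto simp: \<Psi>_def)
  have \<Psi>d: "mdist m' (\<Psi> j) (\<Psi> k) = D j k" for j k by (simp add: \<Psi>_def mc4 Drep)
  have dense: "\<exists>j. mdist m' (\<Psi> j) z < e" if zin: "z \<in> mspace m'" and epos: "e > 0" for z e
  proof -
    have "z \<in> MM.mtopology closure_of F ` range rep" using mc3 zin by (simp add: mtopology_of_def)
    then obtain y where "y \<in> F ` range rep" "y \<in> MM.mball z e" using epos unfolding MM.metric_closure_of by blast
    then obtain j where "y = \<Psi> j" "mdist m' z y < e" by (auto simp: \<Psi>_def)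
    then show ?thesis using MM.commute by metis
  qed
  obtain g :: "(nat \<Rightarrow> real) \<Rightarrow> real" where g: "inj g" using inj_fun_real by blast
  define Y where "Y = mspace m'"
  define S where "S = g ` Y"
  define dT where "dT a b = mdist m' (inv_into Y g a) (inv_into Y g b)" for a b
  define p where "p = g (\<Psi> 0)"
  have injY: "inj_on g Y" using g by (meson inj_on_subset subset_UNIV)
  have dTg: "dT (g u) (g v) = mdist m' u v" if "u \<in> Y" "v \<in> Y" for u v
    using that injY by (simp add: dT_def)
  have MSS: "Metric_space S dT"
    unfolding S_def dT_def[abs_def] Y_def by (rule transport_metric[OF _ injY[unfolded Y_def]]) simp
  have mcS: "Metric_space.mcomplete S dT"
    unfolding S_def dT_def[abs_def] Y_def
    by (rule transport_mcomplete[OF _ _ injY[unfolded Y_def]]) (use mc1 in \<open>simp_all add: mcomplete_of_def\<close>)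
  have pS: "p \<in> S" using \<Psi>in by (simp add: p_def S_def Y_def)
  have s\<sigma>0: "(\<lambda>n. s (\<sigma> n)) \<longlonglongrightarrow> 0" using LIMSEQ_subseq_LIMSEQ[OF s0 \<sigma>mono] by (simp add: o_def)
  have convT: "pGH_conv (\<lambda>n. UNIV) (\<lambda>n a b. (1 / s (\<sigma> n)) * dist a b) (\<lambda>n. x) S dT p"
    unfolding pGH_conv_def
  proof (intro allI impI)
    fix R \<epsilon> :: real assume R: "R > 0" and \<epsilon>: "\<epsilon> > 0"
    define m where "m = nat \<lceil>R + 2 + 8 / \<epsilon>\<rceil>"
    define K where "K = Km m"
    have "R + 2 + 8 / \<epsilon> \<le> real m" unfolding m_def by (rule real_nat_ceiling_ge)
    then have K1: "R + 2 + 8 / \<epsilon> \<le> K" by (simp add: K_def Km_def)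
    have Kpos: "K > 0" using Km1[of m] by (simp add: K_def)
    have KR: "R + 2 \<le> K" using K1 \<epsilon> by (smt (verit) divide_pos_pos)
    have "8 / \<epsilon> < K" using K1 R by simp
    then have "8 < K * \<epsilon>" using \<epsilon> by (simp add: divide_less_eq mult.commute)
    then have Keps: "1 / K < \<epsilon> / 8" using Kpos \<epsilon> by (simp add: divide_less_eq field_simps)
    define N where "N = Nf m"
    define W where "W = insert 0 (jidx m ` {..<N})"
    have Wfin: "finite W" by (simp add: W_def)
    have evA: "\<forall>\<^sub>F n in sequentially. K * s (\<sigma> n) < \<rho>f m"
    proof -
      have "(\<lambda>n. K * s (\<sigma> n)) \<longlonglongrightarrow> K * 0" by (intro tendsto_mult tendsto_const s\<sigma>0)
      then show ?thesis using NR1[of m] by (intro order_tendstoD(2)) auto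
    qed
    have approx: "\<exists>i<N. D (jidx m i) j \<le> 1 / K" if j: "D 0 j < K - 1" for j
    proof (rule ccontr)
      assume "\<not> (\<exists>i<N. D (jidx m i) j \<le> 1 / K)"
      then have gt: "\<forall>i\<in>{..<N}. 1 / K < D (jidx m i) j" by auto
      have ev1: "\<forall>\<^sub>F n in sequentially. \<forall>i\<in>{..<N}. 1 / K < Dk (\<sigma> n) (jidx m i) j"
        using gt by (intro eventually_ball_finite) (auto intro: order_tendstoD(1)[OF Dlim])
      have ev2: "\<forall>\<^sub>F n in sequentially. Dk (\<sigma> n) 0 j < K - 1" by (rule order_tendstoD(2)[OF Dlim j])
      have "\<forall>\<^sub>F n in sequentially. False" using ev1 ev2 evA
      proof eventually_elim
        case (elim n)
        define k where "k = \<sigma> n"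
        have sk: "s k > 0" by (rule spos)
        have "dist x (Q k j) = Dk k 0 j * s k" using sk by (simp add: Dk_def Q0)
        also have "\<dots> \<le> K * s k" using elim(2) sk by (intro mult_right_mono) (auto simp: k_def)
        finally have Qc: "Q k j \<in> cball x (Km m * s k)" by (simp add: K_def)
        have "Km m * s k < \<rho>f m" using elim(3) by (simp add: K_def k_def)
        then have "\<exists>i<Nf m. dist (Pt k m i) (Q k j) < s k / Km m" using Pt2 Qc by blast
        then obtain i where i: "i < Nf m" "dist (Pt k m i) (Q k j) < s k / Km m" by blast
        have "dist (Q k (jidx m i)) (Q k j) / s k < (s k / K) / s k"
          using i sk by (intro divide_strict_right_mono) (auto simp: Qj K_def)
        then have "Dk k (jidx m i) j < 1 / K" using sk by (simp add: Dk_def)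
        moreover have "1 / K < Dk k (jidx m i) j" using elim(1) i(1) by (simp add: N_def k_def)
        ultimately show False by linarith
      qed
      then show False by simp
    qed
    have evB: "\<forall>\<^sub>F n in sequentially. \<forall>w\<in>W. \<forall>w'\<in>W. \<bar>Dk (\<sigma> n) w w' - D w w'\<bar> < \<epsilon> / 4"
    proof (intro eventually_ball_finite[OF Wfin] ballI)
      fix w w' assume "w \<in> W" "w' \<in> W"
      show "\<forall>\<^sub>F n in sequentially. \<bar>Dk (\<sigma> n) w w' - D w w'\<bar> < \<epsilon> / 4"
        using tendstoD[OF Dlim[of w w'], of "\<epsilon> / 4"] \<epsilon> by (simp add: dist_real_def)
    qed
    have evC: "\<forall>\<^sub>F n in sequentially. \<forall>w\<in>W. D 0 w < R - \<epsilon> / 2 \<longrightarrow> Dk (\<sigma> n) 0 w < R"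
    proof (intro eventually_ball_finite[OF Wfin] ballI)
      fix w assume "w \<in> W"
      show "\<forall>\<^sub>F n in sequentially. D 0 w < R - \<epsilon> / 2 \<longrightarrow> Dk (\<sigma> n) 0 w < R"
      proof (cases "D 0 w < R - \<epsilon> / 2")
        case True
        then have "D 0 w < R" using \<epsilon> by simp
        then have "\<forall>\<^sub>F n in sequentially. Dk (\<sigma> n) 0 w < R" by (rule order_tendstoD(2)[OF Dlim])
        then show ?thesis by (rule eventually_mono) simp
      next
        case False then show ?thesis by simp
      qed
    qed
    show "\<forall>\<^sub>F n in sequentially. \<exists>f. (\<forall>a\<in>{a \<in> UNIV. 1 / s (\<sigma> n) * dist x a < R}. f a \<in> S) \<and> f x = p \<and>
             (\<forall>a\<in>{a \<in> UNIV. 1 / s (\<sigma> n) * dist x a < R}. \<forall>b\<in>{b \<in> UNIV. 1 / s (\<sigma> n) * dist x b < R}.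
                 \<bar>dT (f a) (f b) - 1 / s (\<sigma> n) * dist a b\<bar> < \<epsilon>) \<and>
             (\<forall>y\<in>{y \<in> S. dT p y < R - \<epsilon>}. \<exists>a\<in>{a \<in> UNIV. 1 / s (\<sigma> n) * dist x a < R}.
                 dT (f a) y < \<epsilon>)"
      using evA evB evC
    proof eventually_elim
      case (elim n)
      define k where "k = \<sigma> n"
      define u where "u = s k"
      have u: "u > 0" by (simp add: u_def spos)
      have dom: "a \<in> cball x (Km m * s k)" if "1 / s (\<sigma> n) * dist x a < R" for a
      proof -
        have "dist x a < R * u" using that u by (simp add: k_def u_def field_simps)
        also have "\<dots> \<le> K * u" using KR u by (intro mult_right_mono) auto
        finally show ?thesis by (simp add: K_def u_def)
      qed
      define rp where "rp a = (if a = x then 0 else jidx m (SOME i. i < N \<and> dist (Pt k m i) a < u / K))" for a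
      have rp: "rp a \<in> W \<and> dist (Q k (rp a)) a < u / K" if adom: "1 / s (\<sigma> n) * dist x a < R" for a
      proof (cases "a = x")
        case True then show ?thesis using u Kpos by (simp add: rp_def W_def Q0)
      next
        case False
        have "\<exists>i. i < N \<and> dist (Pt k m i) a < u / K"
          using Pt2[OF _ dom[OF adom]] elim(1) by (auto simp: k_def u_def K_def N_def)
        then have "(SOME i. i < N \<and> dist (Pt k m i) a < u / K) < N \<and>
            dist (Pt k m (SOME i. i < N \<and> dist (Pt k m i) a < u / K)) a < u / K" by (rule someI_ex)
        then show ?thesis using False by (simp add: rp_def W_def Qj)
      qed
      define f where "f a = g (\<Psi> (rp a))" for a
      have dTf: "dT (f a) (f b) = D (rp a) (rp b)" for a b
        using dTg \<Psi>in \<Psi>d by (simp add: f_def Y_def)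
      show ?case
      proof (intro exI[of _ f] conjI ballI)
        fix a show "f a \<in> S" using \<Psi>in by (simp add: f_def S_def Y_def)
      next
        show "f x = p" by (simp add: f_def rp_def p_def)
      next
        fix a b assume a: "a \<in> {a \<in> UNIV. 1 / s (\<sigma> n) * dist x a < R}"
          and b: "b \<in> {b \<in> UNIV. 1 / s (\<sigma> n) * dist x b < R}"
        have ra: "rp a \<in> W" "dist (Q k (rp a)) a < u / K" using rp a by auto
        have rb: "rp b \<in> W" "dist (Q k (rp b)) b < u / K" using rp b by auto
        have e1: "\<bar>Dk k (rp a) (rp b) - D (rp a) (rp b)\<bar> < \<epsilon> / 4" using elim(2) ra rb by (simp add: k_def)
        define A where "A = dist (Q k (rp a)) (Q k (rp b))"
        define B where "B = dist a b"
        have t1: "A \<le> dist (Q k (rp a)) a + B + dist b (Q k (rp b))" unfolding A_def B_def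
          using dist_triangle[of "Q k (rp a)" "Q k (rp b)" a] dist_triangle[of a "Q k (rp b)" b] by linarith
        have t2: "B \<le> dist a (Q k (rp a)) + A + dist (Q k (rp b)) b" unfolding A_def B_def
          using dist_triangle[of a b "Q k (rp a)"] dist_triangle[of "Q k (rp a)" b "Q k (rp b)"] by linarith
        have "\<bar>A - B\<bar> < 2 * u / K" using t1 t2 ra rb by (simp add: dist_commute abs_less_iff)
        then have "\<bar>A - B\<bar> / u < (2 * u / K) / u" using u by (intro divide_strict_right_mono) auto
        moreover have "\<bar>A / u - B / u\<bar> = \<bar>A - B\<bar> / u" using u by (simp add: diff_divide_distrib[symmetric] abs_divide)
        moreover have "(2 * u / K) / u = 2 / K" using u by simp
        ultimately have e2: "\<bar>A / u - B / u\<bar> < 2 / K" by simp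
        have "Dk k (rp a) (rp b) = A / u" by (simp add: Dk_def A_def u_def)
        moreover have "1 / s (\<sigma> n) * dist a b = B / u" by (simp add: B_def u_def k_def)
        ultimately show "\<bar>dT (f a) (f b) - 1 / s (\<sigma> n) * dist a b\<bar> < \<epsilon>"
          using e1 e2 Keps unfolding dTf by linarith
      next
        fix y assume y: "y \<in> {y \<in> S. dT p y < R - \<epsilon>}"
        then obtain z where z: "z \<in> Y" "y = g z" by (auto simp: S_def)
        have dz: "mdist m' (\<Psi> 0) z < R - \<epsilon>" using y z dTg \<Psi>in by (simp add: p_def Y_def)
        obtain j where j: "mdist m' (\<Psi> j) z < \<epsilon> / 4" using dense z(1) \<epsilon> Y_def by (metis divide_pos_pos zero_less_numeral)
        have zM: "z \<in> mspace m'" using z Y_def by simp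
        have "D 0 j \<le> mdist m' (\<Psi> 0) z + mdist m' z (\<Psi> j)"
          using MM.triangle[OF \<Psi>in zM \<Psi>in] \<Psi>d by simp
        then have D0j: "D 0 j < R - \<epsilon> + \<epsilon> / 4" using dz j MM.commute[of z "\<Psi> j"] by linarith
        then have "D 0 j < K - 1" using KR \<epsilon> by linarith
        then obtain i where i: "i < N" "D (jidx m i) j \<le> 1 / K" using approx by blast
        define w where "w = jidx m i"
        have wW: "w \<in> W" using i by (simp add: w_def W_def)
        have "D 0 w \<le> D 0 j + D j w" by (rule D_tri)
        moreover have Dwj: "D w j \<le> 1 / K" using i(2) by (simp add: w_def)
        ultimately have "D 0 w < R - \<epsilon> / 2" using D0j D_sym[of j w] Keps \<epsilon> by linarith
        then have "Dk k 0 w < R" using elim(3) wW by (simp add: k_def)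
        define a0 where "a0 = Q k w"
        have a0dom: "1 / s (\<sigma> n) * dist x a0 < R"
          using \<open>Dk k 0 w < R\<close> by (simp add: Dk_def a0_def Q0 k_def)
        have ra: "rp a0 \<in> W" "dist (Q k (rp a0)) a0 < u / K" using rp[OF a0dom] by auto
        have "dist (Q k (rp a0)) (Q k w) / u < (u / K) / u"
          using ra u by (intro divide_strict_right_mono) (auto simp: a0_def)
        then have "Dk k (rp a0) w < 1 / K" using u by (simp add: Dk_def u_def)
        moreover have "\<bar>Dk k (rp a0) w - D (rp a0) w\<bar> < \<epsilon> / 4" using elim(2) ra wW by (simp add: k_def)
        ultimately have Dra: "D (rp a0) w < 1 / K + \<epsilon> / 4" by linarith
        have "dT (f a0) y = mdist m' (\<Psi> (rp a0)) z" using dTg \<Psi>in z by (simp add: f_def Y_def)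
        also have "\<dots> \<le> mdist m' (\<Psi> (rp a0)) (\<Psi> w) + mdist m' (\<Psi> w) z"
          by (rule MM.triangle[OF \<Psi>in \<Psi>in zM])
        also have "\<dots> \<le> mdist m' (\<Psi> (rp a0)) (\<Psi> w) + (mdist m' (\<Psi> w) (\<Psi> j) + mdist m' (\<Psi> j) z)"
          using MM.triangle[OF \<Psi>in \<Psi>in zM] by simp
        also have "\<dots> = D (rp a0) w + D w j + mdist m' (\<Psi> j) z" by (simp add: \<Psi>d)
        also have "\<dots> < \<epsilon>" using Dra Dwj j Keps \<epsilon> D_sym[of w j] by linarith
        finally show "\<exists>a\<in>{a \<in> UNIV. 1 / s (\<sigma> n) * dist x a < R}. dT (f a) y < \<epsilon>" using a0dom by blast
      qed
    qed
  qed
  have "(S, dT, p) \<in> tangents x"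
    unfolding tangents_def
  proof (intro CollectI, unfold prod.case, intro conjI exI[of _ "\<lambda>n. 1 / s (\<sigma> n)"])
    show "Metric_space S dT" by (rule MSS)
    show "Metric_space.mcomplete S dT" by (rule mcS)
    show "p \<in> S" by (rule pS)
    show "\<forall>n. 0 < 1 / s (\<sigma> n)" using spos by simp
    have "filterlim (\<lambda>n. inverse (s (\<sigma> n))) at_top sequentially"
      by (rule filterlim_inverse_at_top[OF s\<sigma>0]) (use spos in simp)
    then show "filterlim (\<lambda>n. 1 / s (\<sigma> n)) at_top sequentially" by (simp add: inverse_eq_divide)
    show "pGH_conv (\<lambda>n. UNIV) (\<lambda>n a b. 1 / s (\<sigma> n) * dist a b) (\<lambda>n. x) S dT p" by (rule convT)
  qed
  then show ?thesis using \<sigma>mono convT by blast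
qed

lemma seq_from_frequently:
  assumes "\<exists>\<^sub>F s in at_right (0::real). P s"
  obtains u where "\<And>k. u k > 0" "u \<longlonglongrightarrow> 0" "\<And>k. P (u k)"
proof -
  have "\<forall>k. \<exists>y. 0 < y \<and> y < inverse (real (Suc k)) \<and> P y"
  proof
    fix k
    show "\<exists>y. 0 < y \<and> y < inverse (real (Suc k)) \<and> P y"
    proof -
      have *: "\<not> (\<exists>b>0. \<forall>y>0. y < b \<longrightarrow> \<not> P y)"
        using assms unfolding frequently_def eventually_at_right_field by simp
      have "inverse (real (Suc k)) > 0" by simp
      with * show ?thesis by blast
    qed
  qed
  then obtain u where u: "\<And>k. 0 < u k \<and> u k < inverse (real (Suc k)) \<and> P (u k)" by metis
  have "u \<longlonglongrightarrow> 0"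
  proof (rule tendsto_sandwich[OF _ _ tendsto_const LIMSEQ_inverse_real_of_nat])
    show "\<forall>\<^sub>F n in sequentially. 0 \<le> u n" using u by (intro always_eventually allI less_imp_le) blast
    show "\<forall>\<^sub>F n in sequentially. u n \<le> inverse (real (Suc n))"
      using u by (intro always_eventually allI less_imp_le) blast
  qed
  then show ?thesis using that u by blast
qed

lemma frequently_from_seq:
  assumes "filterlim u F' sequentially" "\<forall>\<^sub>F n in sequentially. P (u n)" "F' \<noteq> bot"
  shows "\<exists>\<^sub>F s in F'. P s"
proof (rule ccontr)
  assume "\<not> (\<exists>\<^sub>F s in F'. P s)"
  then have "\<forall>\<^sub>F s in F'. \<not> P s" by (simp add: not_frequently)
  then have "\<forall>\<^sub>F n in sequentially. \<not> P (u n)" using assms(1) by (rule eventually_compose_filterlim)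
  with assms(2) have "\<forall>\<^sub>F n in sequentially. False" by (rule eventually_elim2) auto
  then show False by simp
qed

lemma le_Limsup_freq:
  fixes f :: "_ \<Rightarrow> 'b::complete_linorder"
  assumes "\<exists>\<^sub>F x in F. c \<le> f x"
  shows "c \<le> Limsup F f"
proof (rule ccontr)
  assume "\<not> c \<le> Limsup F f"
  then have "\<forall>\<^sub>F x in F. f x < c" using Limsup_lessD by (metis not_le)
  then have "\<forall>\<^sub>F x in F. \<not> c \<le> f x" by (auto elim: eventually_mono)
  then show False using assms by (simp add: not_frequently[symmetric])
qed

lemma Liminf_le_freq:
  fixes f :: "_ \<Rightarrow> 'b::complete_linorder"
  assumes "\<exists>\<^sub>F x in F. f x \<le> c"
  shows "Liminf F f \<le> c"
proof (rule ccontr)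
  assume "\<not> Liminf F f \<le> c"
  then have "\<forall>\<^sub>F x in F. c < f x" using less_LiminfD by (metis not_le)
  then have "\<forall>\<^sub>F x in F. \<not> f x \<le> c" by (auto elim: eventually_mono)
  then show False using assms by (simp add: not_frequently[symmetric])
qed

lemma scaled_to_zero:
  fixes t :: "nat \<Rightarrow> real"
  assumes "\<And>n. t n > 0" "filterlim t at_top sequentially" "c > 0"
  shows "filterlim (\<lambda>n. c / t n) (at_right 0) sequentially"
proof (rule tendsto_imp_filterlim_at_right)
  show "((\<lambda>n. c / t n) \<longlongrightarrow> 0) sequentially"
    by (rule tendsto_divide_0[OF tendsto_const filterlim_at_top_imp_at_infinity[OF assms(2)]])
  show "\<forall>\<^sub>F n in sequentially. 0 < c / t n" using assms by auto
qed

lemma tangentsE: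
  assumes "T \<in> tangents x"
  obtains S dT p t where "T = (S, dT, p)" "Metric_space S dT" "p \<in> S" "\<And>n. t n > 0"
    "filterlim t at_top sequentially"
    "pGH_conv (\<lambda>n. UNIV) (\<lambda>n a b. t n * dist a b) (\<lambda>n. x) S dT p"
proof -
  obtain S dT p where T: "T = (S, dT, p)" by (cases T) blast
  from assms have "Metric_space S dT \<and> p \<in> S \<and> (\<exists>t :: nat \<Rightarrow> real. (\<forall>n. t n > 0) \<and> filterlim t at_top sequentially \<and>
         pGH_conv (\<lambda>n. UNIV) (\<lambda>n a b. t n * dist a b) (\<lambda>n. x) S dT p)"
    unfolding T tangents_def by (simp only: mem_Collect_eq prod.case)
  then show ?thesis using that T by blast
qed

lemma ereal_mult_le_div:
  fixes a b :: ereal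
  assumes "a * ereal \<rho> \<le> b" "\<rho> > 0"
  shows "a \<le> b * ereal (1 / \<rho>)"
proof -
  have "a = a * ereal \<rho> * ereal (1 / \<rho>)"
    using assms(2) by (cases a) auto
  also have "\<dots> \<le> b * ereal (1 / \<rho>)"
    using assms by (intro ereal_mult_right_mono) auto
  finally show ?thesis .
qed

lemma cov_ratio_nonneg:
  assumes "0 < r" "r < 1"
  shows "0 \<le> elog n / ereal (ln (1 / r))"
proof -
  have "ln (1/r) > 0" using assms by simp
  then have "0 / ereal (ln (1/r)) \<le> elog n / ereal (ln (1/r))"
    by (intro ereal_divide_right_mono elog_nonneg) simp
  then show ?thesis by simp
qed

lemma claimU2:
  fixes x :: "'a::metric_space"
  assumes r: "0 < r" "r < 1"
  shows "(SUP T\<in>tangents x. elog (covnum_T T r (unit_cball T)) / ereal (ln (1/r)))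
     \<le> Limsup (at_right 0) (\<lambda>s. elog (covnum UNIV dist ((r/2) * s) (cball x s)) / ereal (ln (1/(r/2))))
        * ereal (ln (1/(r/2)) / ln (1/r))"
proof (rule SUP_least)
  fix T assume "T \<in> tangents x"
  then obtain S dT p t where T: "T = (S, dT, p)" "Metric_space S dT" "p \<in> S" "\<And>n. t n > 0"
    "filterlim t at_top sequentially"
    "pGH_conv (\<lambda>n. UNIV) (\<lambda>n a b. t n * dist a b) (\<lambda>n. x) S dT p"
    by (rule tangentsE) blast
  define e where "e = r/8"
  define G where "G = covnum S dT r {y\<in>S. dT p y \<le> 1}"
  have GT: "covnum_T T r (unit_cball T) = G" by (simp add: T G_def covnum_T_def unit_cball_def)
  have ev: "\<forall>\<^sub>F n in sequentially. G \<le> covnum UNIV dist ((r-2*e)/t n) (cball x ((1+2*e)/t n))"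
    unfolding G_def by (rule tangent_cov_upper[OF T(2) T(6) T(4)]) (use r in \<open>auto simp: e_def\<close>)
  have "\<forall>\<^sub>F n in sequentially. G \<le> covnum UNIV dist ((r/2) * ((1+2*e)/t n)) (cball x ((1+2*e)/t n))"
    using ev
  proof eventually_elim
    case (elim n)
    have tn: "t n > 0" by (rule T(4))
    have "(r/2) * ((1+2*e)/t n) \<le> (r-2*e)/t n"
      using tn r by (simp add: e_def field_simps)
    then have "covnum UNIV dist ((r-2*e)/t n) (cball x ((1+2*e)/t n))
       \<le> covnum UNIV dist ((r/2) * ((1+2*e)/t n)) (cball x ((1+2*e)/t n))"
      by (intro covnum_mono) auto
    then show ?case using elim by simp
  qed
  moreover have "filterlim (\<lambda>n. (1+2*e)/t n) (at_right 0) sequentially"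
    by (rule scaled_to_zero[OF T(4) T(5)]) (use r in \<open>simp add: e_def\<close>)
  ultimately have fr: "\<exists>\<^sub>F s in at_right 0. G \<le> covnum UNIV dist ((r/2) * s) (cball x s)"
    by (intro frequently_from_seq[where u="\<lambda>n. (1+2*e)/t n"]) auto
  have L2: "ln (1/(r/2)) > 0" using r by simp
  have L1: "ln (1/r) > 0" using r by simp
  have "\<exists>\<^sub>F s in at_right 0. elog G / ereal (ln (1/(r/2)))
      \<le> elog (covnum UNIV dist ((r/2) * s) (cball x s)) / ereal (ln (1/(r/2)))"
    using fr by (rule frequently_elim1) (use L2 in \<open>auto intro!: ereal_divide_right_mono elog_mono\<close>)
  then have v: "elog G / ereal (ln (1/(r/2)))
     \<le> Limsup (at_right 0) (\<lambda>s. elog (covnum UNIV dist ((r/2) * s) (cball x s)) / ereal (ln (1/(r/2))))"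
    by (rule le_Limsup_freq)
  have "elog G / ereal (ln (1/r)) = (elog G / ereal (ln (1/(r/2)))) * ereal (ln (1/(r/2)) / ln (1/r))"
    by (rule ereal_div_change[OF elog_nonneg L1 L2])
  also have "\<dots> \<le> Limsup (at_right 0) (\<lambda>s. elog (covnum UNIV dist ((r/2) * s) (cball x s)) / ereal (ln (1/(r/2))))
        * ereal (ln (1/(r/2)) / ln (1/r))"
    using v L1 L2 by (intro ereal_mult_right_mono) auto
  finally show "elog (covnum_T T r (unit_cball T)) / ereal (ln (1/r)) \<le> \<dots>" using GT by simp
qed

lemma claimL1:
  fixes x :: "'a::metric_space"
  assumes r: "0 < r" "r < 1/2"
  shows "Liminf (at_right 0) (\<lambda>s. elog (covnum UNIV dist ((2*r) * s) (cball x s)) / ereal (ln (1/(2*r))))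
        * ereal (ln (1/(2*r)) / ln (1/r))
     \<le> (INF T\<in>tangents x. elog (covnum_T T r (unit_cball T)) / ereal (ln (1/r)))"
proof (rule INF_greatest)
  fix T assume "T \<in> tangents x"
  then obtain S dT p t where T: "T = (S, dT, p)" "Metric_space S dT" "p \<in> S" "\<And>n. t n > 0"
    "filterlim t at_top sequentially"
    "pGH_conv (\<lambda>n. UNIV) (\<lambda>n a b. t n * dist a b) (\<lambda>n. x) S dT p"
    by (rule tangentsE) blast
  define e where "e = r/4"
  define G where "G = covnum S dT r {y\<in>S. dT p y \<le> 1}"
  have GT: "covnum_T T r (unit_cball T) = G" by (simp add: T G_def covnum_T_def unit_cball_def)
  have ev: "\<forall>\<^sub>F n in sequentially. covnum UNIV dist ((r+2*e)/t n) (cball x ((1-e)/t n)) \<le> G"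
    unfolding G_def by (rule tangent_cov_lower[OF T(2) T(6) T(4)]) (use r in \<open>auto simp: e_def\<close>)
  have "\<forall>\<^sub>F n in sequentially. covnum UNIV dist ((2*r) * ((1-e)/t n)) (cball x ((1-e)/t n)) \<le> G"
    using ev
  proof eventually_elim
    case (elim n)
    have tn: "t n > 0" by (rule T(4))
    have "(r+2*e)/t n \<le> (2*r) * ((1-e)/t n)"
      using tn r by (simp add: e_def field_simps)
    then have "covnum UNIV dist ((2*r) * ((1-e)/t n)) (cball x ((1-e)/t n))
       \<le> covnum UNIV dist ((r+2*e)/t n) (cball x ((1-e)/t n))"
      by (intro covnum_mono) auto
    then show ?case using elim by simp
  qed
  moreover have "filterlim (\<lambda>n. (1-e)/t n) (at_right 0) sequentially"
    by (rule scaled_to_zero[OF T(4) T(5)]) (use r in \<open>simp add: e_def\<close>)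
  ultimately have fr: "\<exists>\<^sub>F s in at_right 0. covnum UNIV dist ((2*r) * s) (cball x s) \<le> G"
    by (intro frequently_from_seq[where u="\<lambda>n. (1-e)/t n"]) auto
  have L2: "ln (1/(2*r)) > 0" using r by simp
  have L1: "ln (1/r) > 0" using r by simp
  have "\<exists>\<^sub>F s in at_right 0. elog (covnum UNIV dist ((2*r) * s) (cball x s)) / ereal (ln (1/(2*r)))
       \<le> elog G / ereal (ln (1/(2*r)))"
    using fr by (rule frequently_elim1) (use L2 in \<open>auto intro!: ereal_divide_right_mono elog_mono\<close>)
  then have v: "Liminf (at_right 0) (\<lambda>s. elog (covnum UNIV dist ((2*r) * s) (cball x s)) / ereal (ln (1/(2*r))))
     \<le> elog G / ereal (ln (1/(2*r)))"
    by (rule Liminf_le_freq)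
  have "Liminf (at_right 0) (\<lambda>s. elog (covnum UNIV dist ((2*r) * s) (cball x s)) / ereal (ln (1/(2*r))))
        * ereal (ln (1/(2*r)) / ln (1/r)) \<le> (elog G / ereal (ln (1/(2*r)))) * ereal (ln (1/(2*r)) / ln (1/r))"
    using v L1 L2 by (intro ereal_mult_right_mono) auto
  also have "\<dots> = elog G / ereal (ln (1/r))"
    by (rule ereal_div_change[OF elog_nonneg L1 L2, symmetric])
  finally show "Liminf (at_right 0) (\<lambda>s. elog (covnum UNIV dist ((2*r) * s) (cball x s)) / ereal (ln (1/(2*r))))
        * ereal (ln (1/(2*r)) / ln (1/r)) \<le> elog (covnum_T T r (unit_cball T)) / ereal (ln (1/r))"
    using GT by simp
qed

lemma enat_less_Suc: "a < enat (Suc m) \<Longrightarrow> a \<le> enat m"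
  by (cases a) auto


lemma claimU1:
  fixes x :: "'a::metric_space"
  assumes H: "\<And>lam. lam > 0 \<Longrightarrow> \<exists>N::nat. \<exists>\<rho>>0. \<forall>u. 0 < u \<and> u < \<rho> \<longrightarrow>
                 covnum UNIV dist (lam * u) (cball x u) \<le> enat N"
    and lam: "0 < lam" "lam < 1"
  shows "Limsup (at_right 0) (\<lambda>s. elog (covnum UNIV dist (lam * s) (cball x s)) / ereal (ln (1/lam)))
     \<le> (SUP T\<in>tangents x. elog (covnum_T T (lam/2) (unit_cball T)) / ereal (ln (1/(lam/2))))
        * ereal (ln (1/(lam/2)) / ln (1/lam))"
proof -
  define F where "F s = covnum UNIV dist (lam * s) (cball x s)" for s
  obtain N :: nat and \<rho> where \<rho>: "\<rho> > 0" "\<And>u. 0 < u \<Longrightarrow> u < \<rho> \<Longrightarrow> F u \<le> enat N"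
    using H[OF lam(1)] unfolding F_def by blast
  have evN: "\<forall>\<^sub>F s in at_right 0. F s \<le> enat N"
    unfolding eventually_at_right_field using \<rho> by auto
  define M where "M = (LEAST M. \<forall>\<^sub>F s in at_right 0. F s \<le> enat M)"
  have evM: "\<forall>\<^sub>F s in at_right 0. F s \<le> enat M"
    unfolding M_def using evN by (rule LeastI)
  have frM: "\<exists>\<^sub>F s in at_right 0. enat M \<le> F s"
  proof (rule ccontr)
    assume "\<not> (\<exists>\<^sub>F s in at_right 0. enat M \<le> F s)"
    then have ev: "\<forall>\<^sub>F s in at_right 0. F s < enat M" by (simp add: not_frequently not_le)
    show False
    proof (cases M)
      case 0
      from ev have "\<forall>\<^sub>F s in at_right (0::real). False"
        by (rule eventually_mono) (use 0 in \<open>simp add: zero_enat_def[symmetric]\<close>)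
      then show False by simp
    next
      case (Suc M')
      from ev have "\<forall>\<^sub>F s in at_right 0. F s \<le> enat M'"
        by (rule eventually_mono) (use Suc enat_less_Suc in blast)
      then have "M \<le> M'" unfolding M_def by (rule Least_le)
      then show False using Suc by simp
    qed
  qed
  obtain u where u: "\<And>k. u k > 0" "u \<longlonglongrightarrow> 0" "\<And>k. enat M \<le> F (u k)"
    using seq_from_frequently[OF frM] by blast
  define e where "e = lam/8"
  have e: "0 < e" "e < 1" using lam by (auto simp: e_def)
  define s' where "s' k = u k / (1 - e)" for k
  have s'pos: "\<And>k. s' k > 0" using u(1) e by (simp add: s'_def)
  have s'0: "s' \<longlonglongrightarrow> 0" unfolding s'_def using tendsto_divide[OF u(2) tendsto_const, of "1-e"] e by simp
  obtain S dT p \<sigma> where T: "(S,dT,p) \<in> tangents x" "strict_mono \<sigma>"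
     "pGH_conv (\<lambda>n. UNIV) (\<lambda>n a b. (1 / s' (\<sigma> n)) * dist a b) (\<lambda>n. x) S dT p"
    using tangent_exists[OF H s'pos s'0] by blast
  have MS: "Metric_space S dT" using T(1) unfolding tangents_def by auto
  define G where "G = covnum S dT (lam/2) {y\<in>S. dT p y \<le> 1}"
  have ev: "\<forall>\<^sub>F n in sequentially. covnum UNIV dist ((lam/2+2 * e)/(1 / s' (\<sigma> n))) (cball x ((1-e)/(1 / s' (\<sigma> n)))) \<le> G"
    unfolding G_def by (rule tangent_cov_lower[OF MS T(3)]) (use s'pos e lam in auto)
  then obtain n where n: "covnum UNIV dist ((lam/2+2 * e)/(1 / s' (\<sigma> n))) (cball x ((1-e)/(1 / s' (\<sigma> n)))) \<le> G"
    by (auto simp: eventually_sequentially)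
  have eq1: "(1-e)/(1 / s' (\<sigma> n)) = u (\<sigma> n)" using e by (simp add: s'_def)
  have "(lam/2+2 * e)/(1 / s' (\<sigma> n)) \<le> lam * u (\<sigma> n)"
    using e lam u(1)[of "\<sigma> n"] by (simp add: s'_def e_def field_simps)
  then have "F (u (\<sigma> n)) \<le> covnum UNIV dist ((lam/2+2 * e)/(1 / s' (\<sigma> n))) (cball x ((1-e)/(1 / s' (\<sigma> n))))"
    unfolding F_def eq1 by (intro covnum_mono) auto
  with n u(3)[of "\<sigma> n"] have MG: "enat M \<le> G" by simp
  have L1: "ln (1/lam) > 0" using lam by simp
  have L2: "ln (1/(lam/2)) > 0" using lam by simp
  have "Limsup (at_right 0) (\<lambda>s. elog (F s) / ereal (ln (1/lam))) \<le> elog (enat M) / ereal (ln (1/lam))"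
    by (rule Limsup_bounded, rule eventually_mono[OF evM])
       (use L1 in \<open>auto intro!: ereal_divide_right_mono elog_mono\<close>)
  also have "\<dots> \<le> elog G / ereal (ln (1/lam))"
    using MG L1 by (auto intro!: ereal_divide_right_mono elog_mono)
  also have "\<dots> = (elog G / ereal (ln (1/(lam/2)))) * ereal (ln (1/(lam/2)) / ln (1/lam))"
    by (rule ereal_div_change[OF elog_nonneg L1 L2])
  also have "\<dots> \<le> (SUP T\<in>tangents x. elog (covnum_T T (lam/2) (unit_cball T)) / ereal (ln (1/(lam/2))))
        * ereal (ln (1/(lam/2)) / ln (1/lam))"
  proof (intro ereal_mult_right_mono)
    have "elog (covnum_T (S,dT,p) (lam/2) (unit_cball (S,dT,p))) / ereal (ln (1/(lam/2)))
      \<le> (SUP T\<in>tangents x. elog (covnum_T T (lam/2) (unit_cball T)) / ereal (ln (1/(lam/2))))"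
      by (rule SUP_upper[OF T(1)])
    then show "elog G / ereal (ln (1/(lam/2)))
      \<le> (SUP T\<in>tangents x. elog (covnum_T T (lam/2) (unit_cball T)) / ereal (ln (1/(lam/2))))"
      by (simp add: G_def covnum_T_def unit_cball_def)
    show "0 \<le> ereal (ln (1/(lam/2)) / ln (1/lam))" using L1 L2 by simp
  qed
  finally show ?thesis unfolding F_def .
qed

lemma claimL2:
  fixes x :: "'a::metric_space"
  assumes H: "\<And>lam. lam > 0 \<Longrightarrow> \<exists>N::nat. \<exists>\<rho>>0. \<forall>u. 0 < u \<and> u < \<rho> \<longrightarrow>
                 covnum UNIV dist (lam * u) (cball x u) \<le> enat N"
    and lam: "0 < lam" "lam < 1/2"
  shows "(INF T\<in>tangents x. elog (covnum_T T (2 * lam) (unit_cball T)) / ereal (ln (1/(2 * lam))))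
        * ereal (ln (1/(2 * lam)) / ln (1/lam))
     \<le> Liminf (at_right 0) (\<lambda>s. elog (covnum UNIV dist (lam * s) (cball x s)) / ereal (ln (1/lam)))"
proof -
  define F where "F s = covnum UNIV dist (lam * s) (cball x s)" for s
  obtain N :: nat and \<rho> where \<rho>: "\<rho> > 0" "\<And>u. 0 < u \<Longrightarrow> u < \<rho> \<Longrightarrow> F u \<le> enat N"
    using H[OF lam(1)] unfolding F_def by blast
  have evN: "\<forall>\<^sub>F s in at_right 0. F s \<le> enat N"
    unfolding eventually_at_right_field using \<rho> by auto
  have frN: "\<exists>\<^sub>F s in at_right 0. F s \<le> enat N"
    using evN by (rule eventually_frequently[rotated]) simp
  define m where "m = (LEAST m. \<exists>\<^sub>F s in at_right 0. F s \<le> enat m)"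
  have frm: "\<exists>\<^sub>F s in at_right 0. F s \<le> enat m"
    unfolding m_def using frN by (rule LeastI)
  have evm: "\<forall>\<^sub>F s in at_right 0. enat m \<le> F s"
  proof (rule ccontr)
    assume "\<not> (\<forall>\<^sub>F s in at_right 0. enat m \<le> F s)"
    then have fr: "\<exists>\<^sub>F s in at_right 0. F s < enat m" by (simp add: not_eventually not_le)
    show False
    proof (cases m)
      case 0
      from fr have "\<exists>\<^sub>F s in at_right (0::real). False"
        by (rule frequently_elim1) (use 0 in \<open>simp add: zero_enat_def[symmetric]\<close>)
      then show False by simp
    next
      case (Suc m')
      from fr have "\<exists>\<^sub>F s in at_right 0. F s \<le> enat m'"
        by (rule frequently_elim1) (use Suc enat_less_Suc in blast)
      then have "m \<le> m'" unfolding m_def by (rule Least_le)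
      then show False using Suc by simp
    qed
  qed
  obtain u where u: "\<And>k. u k > 0" "u \<longlonglongrightarrow> 0" "\<And>k. F (u k) \<le> enat m"
    using seq_from_frequently[OF frm] by blast
  define e where "e = lam/4"
  have e: "0 < e" "e < 1" using lam by (auto simp: e_def)
  define s' where "s' k = u k / (1 + 2 * e)" for k
  have s'pos: "\<And>k. s' k > 0" using u(1) e by (simp add: s'_def)
  have s'0: "s' \<longlonglongrightarrow> 0" unfolding s'_def using tendsto_divide[OF u(2) tendsto_const, of "1+2 * e"] e by simp
  obtain S dT p \<sigma> where T: "(S,dT,p) \<in> tangents x" "strict_mono \<sigma>"
     "pGH_conv (\<lambda>n. UNIV) (\<lambda>n a b. (1 / s' (\<sigma> n)) * dist a b) (\<lambda>n. x) S dT p"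
    using tangent_exists[OF H s'pos s'0] by blast
  have MS: "Metric_space S dT" using T(1) unfolding tangents_def by auto
  define G where "G = covnum S dT (2 * lam) {y\<in>S. dT p y \<le> 1}"
  have ev: "\<forall>\<^sub>F n in sequentially. G \<le> covnum UNIV dist ((2 * lam-2 * e)/(1 / s' (\<sigma> n))) (cball x ((1+2 * e)/(1 / s' (\<sigma> n))))"
    unfolding G_def by (rule tangent_cov_upper[OF MS T(3)]) (use s'pos e lam in \<open>auto simp: e_def\<close>)
  then obtain n where n: "G \<le> covnum UNIV dist ((2 * lam-2 * e)/(1 / s' (\<sigma> n))) (cball x ((1+2 * e)/(1 / s' (\<sigma> n))))"
    by (auto simp: eventually_sequentially)
  have eq1: "(1+2 * e)/(1 / s' (\<sigma> n)) = u (\<sigma> n)" using e by (simp add: s'_def)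
  have "lam * u (\<sigma> n) \<le> (2 * lam-2 * e)/(1 / s' (\<sigma> n))"
    using e lam u(1)[of "\<sigma> n"] by (simp add: s'_def e_def field_simps)
  then have "covnum UNIV dist ((2 * lam-2 * e)/(1 / s' (\<sigma> n))) (cball x ((1+2 * e)/(1 / s' (\<sigma> n)))) \<le> F (u (\<sigma> n))"
    unfolding F_def eq1 by (intro covnum_mono) auto
  with n u(3)[of "\<sigma> n"] have Gm: "G \<le> enat m" by simp
  have L1: "ln (1/lam) > 0" using lam by simp
  have L2: "ln (1/(2 * lam)) > 0" using lam by simp
  have "(INF T\<in>tangents x. elog (covnum_T T (2 * lam) (unit_cball T)) / ereal (ln (1/(2 * lam))))
        * ereal (ln (1/(2 * lam)) / ln (1/lam)) \<le> (elog G / ereal (ln (1/(2 * lam)))) * ereal (ln (1/(2 * lam)) / ln (1/lam))"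
  proof (intro ereal_mult_right_mono)
    have "(INF T\<in>tangents x. elog (covnum_T T (2 * lam) (unit_cball T)) / ereal (ln (1/(2 * lam))))
      \<le> elog (covnum_T (S,dT,p) (2 * lam) (unit_cball (S,dT,p))) / ereal (ln (1/(2 * lam)))"
      by (rule INF_lower[OF T(1)])
    then show "(INF T\<in>tangents x. elog (covnum_T T (2 * lam) (unit_cball T)) / ereal (ln (1/(2 * lam))))
      \<le> elog G / ereal (ln (1/(2 * lam)))"
      by (simp add: G_def covnum_T_def unit_cball_def)
    show "0 \<le> ereal (ln (1/(2 * lam)) / ln (1/lam))" using L1 L2 by simp
  qed
  also have "\<dots> = elog G / ereal (ln (1/lam))"
    by (rule ereal_div_change[OF elog_nonneg L1 L2, symmetric])
  also have "\<dots> \<le> elog (enat m) / ereal (ln (1/lam))"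
    using Gm L1 by (auto intro!: ereal_divide_right_mono elog_mono)
  also have "\<dots> \<le> Liminf (at_right 0) (\<lambda>s. elog (F s) / ereal (ln (1/lam)))"
    by (rule Liminf_bounded, rule eventually_mono[OF evm])
       (use L1 in \<open>auto intro!: ereal_divide_right_mono elog_mono\<close>)
  finally show ?thesis unfolding F_def .
qed

lemma ev_small:
  assumes "c > 0" "\<And>x. 0 < x \<Longrightarrow> x < c \<Longrightarrow> P x"
  shows "\<forall>\<^sub>F x in at_right (0::real). P x"
  unfolding eventually_at_right_field using assms by auto

lemma ratio_lim:
  assumes "c > 0"
  shows "((\<lambda>x. ln (1 / (c * x)) / ln (1 / x)) \<longlongrightarrow> 1) (at_right (0::real))"
proof -
  have "filterlim (\<lambda>x. ln (inverse x)) at_top (at_right (0::real))"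
    by (rule filterlim_compose[OF ln_at_top filterlim_inverse_at_top_right])
  then have lnlim: "filterlim (\<lambda>x. ln (1 / x)) at_top (at_right (0::real))"
    by (simp add: inverse_eq_divide)
  have "((\<lambda>x. 1 + ln (1/c) / ln (1/x)) \<longlongrightarrow> 1 + 0) (at_right (0::real))"
    by (intro tendsto_add tendsto_const tendsto_divide_0[OF tendsto_const]
        filterlim_at_top_imp_at_infinity[OF lnlim])
  then have lim: "((\<lambda>x. 1 + ln (1/c) / ln (1/x)) \<longlongrightarrow> 1) (at_right (0::real))" by simp
  have "\<forall>\<^sub>F x in at_right (0::real). 1 + ln (1/c) / ln (1/x) = ln (1 / (c * x)) / ln (1 / x)"
  proof (rule ev_small[of 1])
    fix x :: real assume x: "0 < x" "x < 1"
    have L: "ln (1/x) > 0" using x by simp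
    have "ln (1 / (c * x)) = ln (1/c) + ln (1/x)"
      using x assms by (simp add: ln_div ln_mult)
    then show "1 + ln (1/c) / ln (1/x) = ln (1 / (c * x)) / ln (1 / x)"
      using L by (simp add: field_simps)
  qed simp
  then show ?thesis by (rule Lim_transform_eventually[OF lim])
qed

lemma ratio_lim_inv:
  assumes "c > 0"
  shows "((\<lambda>x. 1 / (ln (1 / (c * x)) / ln (1 / x))) \<longlongrightarrow> 1) (at_right (0::real))"
  using tendsto_divide[OF tendsto_const ratio_lim[OF assms], of 1] by simp

lemma hyp_process:
  fixes x :: "'a::metric_space"
  assumes "\<And>lam. lam > 0 \<Longrightarrow>
             Limsup (at_right 0) (\<lambda>r. covnum UNIV dist (lam * r) (cball x r)) < \<infinity>"
    and lam: "lam > 0"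
  shows "\<exists>N::nat. \<exists>\<rho>>0. \<forall>u. 0 < u \<and> u < \<rho> \<longrightarrow> covnum UNIV dist (lam * u) (cball x u) \<le> enat N"
proof -
  obtain N where N: "Limsup (at_right 0) (\<lambda>r. covnum UNIV dist (lam * r) (cball x r)) = enat N"
    using assms(1)[OF lam] by (auto elim: less_infinityE)
  then have "Limsup (at_right 0) (\<lambda>r. covnum UNIV dist (lam * r) (cball x r)) < enat (Suc N)" by simp
  then have "\<forall>\<^sub>F r in at_right 0. covnum UNIV dist (lam * r) (cball x r) < enat (Suc N)"
    by (rule Limsup_lessD)
  then have "\<forall>\<^sub>F r in at_right 0. covnum UNIV dist (lam * r) (cball x r) \<le> enat N"
    by (rule eventually_mono) (rule enat_less_Suc)
  then show ?thesis unfolding eventually_at_right_field by auto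
qed

theorem theorem3p4:
  fixes x :: "'a::metric_space"
  assumes "\<And>lam. lam > 0 \<Longrightarrow>
             Limsup (at_right 0) (\<lambda>r. covnum UNIV dist (lam * r) (cball x r)) < \<infinity>"
  shows "upper_tdim x = Limsup (at_right 0) (\<lambda>r. SUP T\<in>tangents x.
            elog (covnum_T T r (unit_cball T)) / ereal (ln (1 / r))) \<and>
         lower_tdim x = Liminf (at_right 0) (\<lambda>r. INF T\<in>tangents x.
            elog (covnum_T T r (unit_cball T)) / ereal (ln (1 / r)))"
proof -
  have H: "\<And>lam. lam > 0 \<Longrightarrow> \<exists>N::nat. \<exists>\<rho>>0. \<forall>u. 0 < u \<and> u < \<rho> \<longrightarrow>
                 covnum UNIV dist (lam * u) (cball x u) \<le> enat N"
    using hyp_process[OF assms] by blast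
  have ne: "tangents x \<noteq> {}"
  proof -
    have ipos: "0 < inverse (real (Suc k))" for k
    proof -
      have "0 < real (Suc k)" by (rule of_nat_0_less_iff[THEN iffD2]) simp
      then show ?thesis by (rule positive_imp_inverse_positive)
    qed
    have "\<exists>S dT p \<sigma>. (S,dT,p) \<in> tangents x \<and> strict_mono \<sigma> \<and>
           pGH_conv (\<lambda>n. UNIV) (\<lambda>n a b. (1 / inverse (real (Suc (\<sigma> n)))) * dist a b) (\<lambda>n. x) S dT p"
      by (rule tangent_exists[OF H ipos LIMSEQ_inverse_real_of_nat])
    then show ?thesis by blast
  qed
  define phi where "phi lam = Limsup (at_right 0) (\<lambda>s. elog (covnum UNIV dist (lam * s) (cball x s)) / ereal (ln (1 / lam)))" for lam :: real
  define psi where "psi lam = Liminf (at_right 0) (\<lambda>s. elog (covnum UNIV dist (lam * s) (cball x s)) / ereal (ln (1 / lam)))" for lam :: real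
  define HU where "HU r = (SUP T\<in>tangents x. elog (covnum_T T r (unit_cball T)) / ereal (ln (1 / r)))" for r :: real
  define HL where "HL r = (INF T\<in>tangents x. elog (covnum_T T r (unit_cball T)) / ereal (ln (1 / r)))" for r :: real
  have up: "upper_tdim x = Limsup (at_right 0) phi" unfolding upper_tdim_def phi_def[abs_def] by (rule refl)
  have lo: "lower_tdim x = Liminf (at_right 0) psi" unfolding lower_tdim_def psi_def[abs_def] by (rule refl)
  have HU0: "0 \<le> HU r" if "0 < r" "r < 1" for r
  proof -
    obtain T0 where "T0 \<in> tangents x" using ne by blast
    then show ?thesis unfolding HU_def by (rule SUP_upper2) (rule cov_ratio_nonneg[OF that])
  qed
  have HL0: "0 \<le> HL r" if "0 < r" "r < 1" for r
    unfolding HL_def by (rule INF_greatest) (rule cov_ratio_nonneg[OF that])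
  have phi0: "0 \<le> phi r" if "0 < r" "r < 1" for r
    unfolding phi_def by (rule le_Limsup) (auto intro!: always_eventually cov_ratio_nonneg[OF that])
  have psi0: "0 \<le> psi r" if "0 < r" "r < 1" for r
    unfolding psi_def by (rule Liminf_bounded) (auto intro!: always_eventually cov_ratio_nonneg[OF that])
  have hq: "(1/2) * x = x / 2" for x :: real by simp
  have A: "Limsup (at_right 0) phi \<le> Limsup (at_right 0) HU"
  proof -
    have "Limsup (at_right 0) phi \<le> Limsup (at_right 0) (\<lambda>x. HU ((1/2) * x))"
    proof (rule limsup_ratio[OF ratio_lim[of "1/2"]])
      show "\<forall>\<^sub>F x in at_right 0. phi x \<le> HU ((1/2) * x) * ereal (ln (1 / ((1/2) * x)) / ln (1 / x))"
        by (rule ev_small[of 1]) (use claimU1[OF H] in \<open>auto simp: phi_def HU_def hq\<close>)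
      show "\<forall>\<^sub>F x in at_right 0. 0 \<le> HU ((1/2) * x)"
        by (rule ev_small[of 1]) (auto intro!: HU0)
    qed simp
    also have "\<dots> = Limsup (at_right 0) HU" by (rule limsup_rescale) simp
    finally show ?thesis .
  qed
  have B: "Limsup (at_right 0) HU \<le> Limsup (at_right 0) phi"
  proof -
    have "Limsup (at_right 0) HU \<le> Limsup (at_right 0) (\<lambda>x. phi ((1/2) * x))"
    proof (rule limsup_ratio[OF ratio_lim[of "1/2"]])
      show "\<forall>\<^sub>F x in at_right 0. HU x \<le> phi ((1/2) * x) * ereal (ln (1 / ((1/2) * x)) / ln (1 / x))"
        by (rule ev_small[of 1]) (use claimU2 in \<open>auto simp: phi_def HU_def hq\<close>)
      show "\<forall>\<^sub>F x in at_right 0. 0 \<le> phi ((1/2) * x)"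
        by (rule ev_small[of 1]) (auto intro!: phi0)
    qed simp
    also have "\<dots> = Limsup (at_right 0) phi" by (rule limsup_rescale) simp
    finally show ?thesis .
  qed
  have C: "Liminf (at_right 0) psi \<le> Liminf (at_right 0) HL"
  proof -
    have "Liminf (at_right 0) psi = Liminf (at_right 0) (\<lambda>x. psi (2 * x))"
      by (rule liminf_rescale[symmetric]) simp
    also have "\<dots> \<le> Liminf (at_right 0) HL"
    proof (rule liminf_ratio[OF ratio_lim_inv[of 2]])
      show "\<forall>\<^sub>F x in at_right 0. psi (2 * x) \<le> HL x * ereal (1 / (ln (1 / (2 * x)) / ln (1 / x)))"
      proof (rule ev_small[of "1/2"])
        fix r :: real assume r: "0 < r" "r < 1/2"
        have "psi (2 * r) * ereal (ln (1 / (2 * r)) / ln (1 / r)) \<le> HL r"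
          using claimL1[OF r, of x] by (simp add: psi_def HL_def)
        moreover have "ln (1 / (2 * r)) / ln (1 / r) > 0" using r by (simp add: divide_pos_pos)
        ultimately show "psi (2 * r) \<le> HL r * ereal (1 / (ln (1 / (2 * r)) / ln (1 / r)))"
          by (rule ereal_mult_le_div)
      qed simp
      show "\<forall>\<^sub>F x in at_right 0. 0 \<le> HL x"
        by (rule ev_small[of 1]) (auto intro!: HL0)
    qed simp
    finally show ?thesis .
  qed
  have D: "Liminf (at_right 0) HL \<le> Liminf (at_right 0) psi"
  proof -
    have "Liminf (at_right 0) HL = Liminf (at_right 0) (\<lambda>x. HL (2 * x))"
      by (rule liminf_rescale[symmetric]) simp
    also have "\<dots> \<le> Liminf (at_right 0) psi"
    proof (rule liminf_ratio[OF ratio_lim_inv[of 2]])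
      show "\<forall>\<^sub>F x in at_right 0. HL (2 * x) \<le> psi x * ereal (1 / (ln (1 / (2 * x)) / ln (1 / x)))"
      proof (rule ev_small[of "1/2"])
        fix r :: real assume r: "0 < r" "r < 1/2"
        have "HL (2 * r) * ereal (ln (1 / (2 * r)) / ln (1 / r)) \<le> psi r"
          using claimL2[OF H r] by (simp add: psi_def HL_def)
        moreover have "ln (1 / (2 * r)) / ln (1 / r) > 0" using r by (simp add: divide_pos_pos)
        ultimately show "HL (2 * r) \<le> psi r * ereal (1 / (ln (1 / (2 * r)) / ln (1 / r)))"
          by (rule ereal_mult_le_div)
      qed simp
      show "\<forall>\<^sub>F x in at_right 0. 0 \<le> psi x"
        by (rule ev_small[of 1]) (auto intro!: psi0)
    qed simp
    finally show ?thesis .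
  qed
  have "upper_tdim x = Limsup (at_right 0) HU" using A B up by simp
  moreover have "lower_tdim x = Liminf (at_right 0) HL" using C D lo by simp
  ultimately show ?thesis unfolding HU_def HL_def by simp
qed

end
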